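(* Let $n\ge1$. For all integers $p_n,\dots,p_1,q\ge0$, the unit map $\eta\Delta[p_n,\dots,p_1,q]\colon\Delta[p_n,\dots,p_1,q]\to NK\Delta[p_n,\dots,p_1,q]$ of the adjunction $K\dashv N$ is a Reedy equivalence in $\mathrm{s}^n\mathcal S$.
   Context: An $n$-relative category $\mathcal C=(a\mathcal C,v_1\mathcal C,\dots,v_n\mathcal C,w\mathcal C)$ consists of a category $a\mathcal C$ and subcategories $v_1\mathcal C,\dots,v_n\mathcal C,w\mathcal C\subset a\mathcal C$, each containing all objects, with $w\mathcal C\subset v_i\mathcal C$ for all $i$, such that (i) every map of $a\mathcal C$ is a finite composite of maps in the $v_i\mathcal C$, and (ii) every relation in $a\mathcal C$ is a consequence of the commutativity of squares $y_2x_1=x_2y_1$ with $x_1,x_2\in v_i\mathcal C$, $y_1,y_2\in v_j\mathcal C$. $\mathbf{Rel}^n\mathbf{Cat}$ is the category of small $n$-relative categories and functors of ambient categories preserving $w$ and each $v_i$. For $p\ge0$, $\mathbf p$ is the poset $0\to\cdots\to p$ and $|\mathbf p|$ its discrete subcategory; $\mathbf p_n^{v_n}\times\cdots\times\mathbf p_1^{v_1}\times\mathbf q^w$ is the $n$-relative category with ambient category $\mathbf p_n\times\cdots\times\mathbf p_1\times\mathbf q$, $w=|\mathbf p_n|\times\cdots\times|\mathbf p_1|\times\mathbf q$, $v_i=|\mathbf p_n|\times\cdots\times\mathbf p_i\times\cdots\times|\mathbf p_1|\times\mathbf q$. $\mathrm{s}^n\mathcal S$ is the category of $(n+1)$-simplicial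 sets with multisimplices indexed by $(p_n,\dots,p_1,q)$ and standard (representable) multisimplices $\Delta[p_n,\dots,p_1,q]$. $N\mathcal C$ has as $(p_n,\dots,p_1,q)$-simplices the relative functors $\mathbf p_n^{v_n}\times\cdots\times\mathbf p_1^{v_1}\times\mathbf q^w\to\mathcal C$; $K$ is its left adjoint, with $K\Delta[p_n,\dots,p_1,q]=\mathbf p_n^{v_n}\times\cdots\times\mathbf p_1^{v_1}\times\mathbf q^w$. A map $X\to Y$ in $\mathrm{s}^n\mathcal S$ is a Reedy equivalence if for each $(p_n,\dots,p_1)$ the map of simplicial sets $X_{p_n,\dots,p_1,\bullet}\to Y_{p_n,\dots,p_1,\bullet}$ is a weak equivalence. *)

theory Defs
  imports "HOL-Analysis.Analysis" "HOL-Homology.Homology"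
begin

text \<open>Monotone maps [k] -> [m], represented canonically as the list of their values.\<close>
definition mono_list :: "nat \<Rightarrow> nat \<Rightarrow> nat list set" where
  "mono_list k m = {\<theta>. length \<theta> = Suc k \<and> sorted \<theta> \<and> (\<forall>i\<in>set \<theta>. i \<le> m)}"

text \<open>A simplicial set is given by its sets of simplices X k (k >= 0) and the action
  act theta : X m -> X k of a monotone map theta : [k] -> [m] (theta^* ).\<close>

text \<open>Induced map on topological simplices, theta_* : Delta^k -> Delta^m.\<close>
definition simplex_map :: "nat list \<Rightarrow> (nat \<Rightarrow> real) \<Rightarrow> (nat \<Rightarrow> real)" where
  "simplex_map \<theta> t = (\<lambda>j. \<Sum>i\<in>{i. i < length \<theta> \<and> \<theta> ! i = j}. t i)"

definition real_carrier :: "(nat \<Rightarrow> 'a set) \<Rightarrow> (nat \<times> 'a \<times> (nat \<Rightarrow> real)) set" where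
  "real_carrier X = {(k, x, t). x \<in> X k \<and> t \<in> standard_simplex k}"

definition real_pre :: "(nat \<Rightarrow> 'a set) \<Rightarrow> (nat \<times> 'a \<times> (nat \<Rightarrow> real)) topology" where
  "real_pre X = sum_topology
     (\<lambda>k. prod_topology (discrete_topology (X k))
                        (subtopology (powertop_real UNIV) (standard_simplex k))) UNIV"

definition real_rel :: "(nat \<Rightarrow> 'a set) \<Rightarrow> (nat list \<Rightarrow> 'a \<Rightarrow> 'a)
    \<Rightarrow> (nat \<times> 'a \<times> (nat \<Rightarrow> real)) \<Rightarrow> (nat \<times> 'a \<times> (nat \<Rightarrow> real)) \<Rightarrow> bool" where
  "real_rel X act a b \<longleftrightarrow>
     (\<exists>k m \<theta> x t. \<theta> \<in> mono_list k m \<and> x \<in> X m \<and> t \<in> standard_simplex k \<and>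
        a = (k, act \<theta> x, t) \<and> b = (m, x, simplex_map \<theta> t))"

definition real_class :: "(nat \<Rightarrow> 'a set) \<Rightarrow> (nat list \<Rightarrow> 'a \<Rightarrow> 'a)
    \<Rightarrow> (nat \<times> 'a \<times> (nat \<Rightarrow> real)) \<Rightarrow> (nat \<times> 'a \<times> (nat \<Rightarrow> real)) set" where
  "real_class X act a = {b \<in> real_carrier X. equivclp (real_rel X act) a b}"

definition realization :: "(nat \<Rightarrow> 'a set) \<Rightarrow> (nat list \<Rightarrow> 'a \<Rightarrow> 'a)
    \<Rightarrow> (nat \<times> 'a \<times> (nat \<Rightarrow> real)) set topology" where
  "realization X act = topology (\<lambda>U. U \<subseteq> real_class X act ` real_carrier X \<and>
      openin (real_pre X) {a \<in> real_carrier X. real_class X act a \<in> U})"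

definition realize_map :: "(nat \<Rightarrow> 'b set) \<Rightarrow> (nat list \<Rightarrow> 'b \<Rightarrow> 'b) \<Rightarrow> (nat \<Rightarrow> 'a \<Rightarrow> 'b)
    \<Rightarrow> (nat \<times> 'a \<times> (nat \<Rightarrow> real)) set \<Rightarrow> (nat \<times> 'b \<times> (nat \<Rightarrow> real)) set" where
  "realize_map Y actY F c =
     (case (SOME a. a \<in> c) of (k, x, t) \<Rightarrow> real_class Y actY (k, F k x, t))"

definition sph_base :: "nat \<Rightarrow> real" where
  "sph_base = (\<lambda>i. if i = 0 then 1 else 0)"

text \<open>Weak homotopy equivalence: continuous, and bijective on all (pointed) homotopy
  sets pi_k(X, x0) -> pi_k(Y, g x0), k >= 0, for every base point x0 (a bijective
  homomorphism of groups being an isomorphism).\<close>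
definition weak_homotopy_equivalence :: "'a topology \<Rightarrow> 'b topology \<Rightarrow> ('a \<Rightarrow> 'b) \<Rightarrow> bool" where
  "weak_homotopy_equivalence X Y g \<longleftrightarrow> continuous_map X Y g \<and>
    (\<forall>k. \<forall>x0\<in>topspace X.
      (\<forall>\<beta>. continuous_map (nsphere k) Y \<beta> \<and> \<beta> sph_base = g x0 \<longrightarrow>
         (\<exists>\<alpha>. continuous_map (nsphere k) X \<alpha> \<and> \<alpha> sph_base = x0 \<and>
              homotopic_with (\<lambda>h. h sph_base = g x0) (nsphere k) Y (g \<circ> \<alpha>) \<beta>)) \<and>
      (\<forall>\<alpha>1 \<alpha>2. continuous_map (nsphere k) X \<alpha>1 \<and> \<alpha>1 sph_base = x0 \<and>
               continuous_map (nsphere k) X \<alpha>2 \<and> \<alpha>2 sph_base = x0 \<and>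
               homotopic_with (\<lambda>h. h sph_base = g x0) (nsphere k) Y (g \<circ> \<alpha>1) (g \<circ> \<alpha>2) \<longrightarrow>
               homotopic_with (\<lambda>h. h sph_base = x0) (nsphere k) X \<alpha>1 \<alpha>2))"

definition sset_weq :: "(nat \<Rightarrow> 'a set) \<Rightarrow> (nat list \<Rightarrow> 'a \<Rightarrow> 'a)
    \<Rightarrow> (nat \<Rightarrow> 'b set) \<Rightarrow> (nat list \<Rightarrow> 'b \<Rightarrow> 'b) \<Rightarrow> (nat \<Rightarrow> 'a \<Rightarrow> 'b) \<Rightarrow> bool" where
  "sset_weq X actX Y actY F \<longleftrightarrow>
     weak_homotopy_equivalence (realization X actX) (realization Y actY) (realize_map Y actY F)"

text \<open>(n+1)-simplicial sets are presented by their simplices X ps q indexed by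
  ps = [p_n,...,p_1] (a list of length n) and q, together with the simplicial
  action in the last (q) direction, which is all that the Reedy equivalence
  condition refers to.\<close>
definition reedy_weq :: "nat \<Rightarrow> (nat list \<Rightarrow> nat \<Rightarrow> 'a set) \<Rightarrow> (nat list \<Rightarrow> nat list \<Rightarrow> 'a \<Rightarrow> 'a)
    \<Rightarrow> (nat list \<Rightarrow> nat \<Rightarrow> 'b set) \<Rightarrow> (nat list \<Rightarrow> nat list \<Rightarrow> 'b \<Rightarrow> 'b)
    \<Rightarrow> (nat list \<Rightarrow> nat \<Rightarrow> 'a \<Rightarrow> 'b) \<Rightarrow> bool" where
  "reedy_weq n X actX Y actY F \<longleftrightarrow>
     (\<forall>ps'. length ps' = n \<longrightarrow> sset_weq (X ps') (actX ps') (Y ps') (actY ps') (F ps'))"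

definition Delta_simp :: "nat list \<Rightarrow> nat \<Rightarrow> nat list \<Rightarrow> nat \<Rightarrow> (nat list list \<times> nat list) set" where
  "Delta_simp ps q ps' q' = {(\<alpha>s, \<beta>). length \<alpha>s = length ps \<and>
      (\<forall>i<length ps. \<alpha>s ! i \<in> mono_list (ps' ! i) (ps ! i)) \<and> \<beta> \<in> mono_list q' q}"

definition Delta_act :: "nat list \<Rightarrow> nat list \<Rightarrow> (nat list list \<times> nat list) \<Rightarrow> (nat list list \<times> nat list)" where
  "Delta_act ps' \<theta> s = (fst s, map (\<lambda>i. snd s ! i) \<theta>)"

definition Obj :: "nat list \<Rightarrow> nat \<Rightarrow> (nat list \<times> nat) set" where
  "Obj ps q = {(xs, y). length xs = length ps \<and> (\<forall>i<length ps. xs ! i \<le> ps ! i) \<and> y \<le> q}"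

text \<open>There is a (unique) morphism a -> b iff a <= b componentwise.\<close>
definition leq :: "(nat list \<times> nat) \<Rightarrow> (nat list \<times> nat) \<Rightarrow> bool" where
  "leq a b \<longleftrightarrow> list_all2 (\<le>) (fst a) (fst b) \<and> snd a \<le> snd b"

text \<open>w = |p_n| x ... x |p_1| x q.\<close>
definition in_w :: "(nat list \<times> nat) \<Rightarrow> (nat list \<times> nat) \<Rightarrow> bool" where
  "in_w a b \<longleftrightarrow> leq a b \<and> fst a = fst b"

text \<open>v_i = |p_n| x ... x p_i x ... x |p_1| x q (i indexes the list position).\<close>
definition in_v :: "nat \<Rightarrow> (nat list \<times> nat) \<Rightarrow> (nat list \<times> nat) \<Rightarrow> bool" where
  "in_v i a b \<longleftrightarrow> leq a b \<and> (\<forall>j<length (fst a). j \<noteq> i \<longrightarrow> fst a ! j = fst b ! j)"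

text \<open>(ps',q')-simplices of N K Delta[ps,q]: relative functors
  p'_n^{v_n} x ... x p'_1^{v_1} x q'^w -> p_n^{v_n} x ... x p_1^{v_1} x q^w, i.e.
  monotone maps of the posets preserving w and each v_i (as extensional functions).\<close>
definition NK_simp :: "nat list \<Rightarrow> nat \<Rightarrow> nat list \<Rightarrow> nat \<Rightarrow> (nat list \<times> nat \<Rightarrow> nat list \<times> nat) set" where
  "NK_simp ps q ps' q' = {f. f \<in> extensional (Obj ps' q') \<and> f \<in> Obj ps' q' \<rightarrow> Obj ps q \<and>
      (\<forall>a\<in>Obj ps' q'. \<forall>b\<in>Obj ps' q'. leq a b \<longrightarrow> leq (f a) (f b)) \<and>
      (\<forall>a\<in>Obj ps' q'. \<forall>b\<in>Obj ps' q'. in_w a b \<longrightarrow> in_w (f a) (f b)) \<and>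
      (\<forall>i<length ps. \<forall>a\<in>Obj ps' q'. \<forall>b\<in>Obj ps' q'. in_v i a b \<longrightarrow> in_v i (f a) (f b))}"

definition NK_act :: "nat list \<Rightarrow> nat list \<Rightarrow> (nat list \<times> nat \<Rightarrow> nat list \<times> nat) \<Rightarrow> (nat list \<times> nat \<Rightarrow> nat list \<times> nat)" where
  "NK_act ps' \<theta> f = restrict (\<lambda>(xs, y). f (xs, \<theta> ! y)) (Obj ps' (length \<theta> - 1))"

definition unit_Delta :: "nat list \<Rightarrow> nat \<Rightarrow> nat list \<Rightarrow> nat \<Rightarrow> (nat list list \<times> nat list)
    \<Rightarrow> (nat list \<times> nat \<Rightarrow> nat list \<times> nat)" where
  "unit_Delta ps q ps' q' s = restrict
     (\<lambda>(xs, y). (map (\<lambda>i. fst s ! i ! (xs ! i)) [0..<length xs], snd s ! y)) (Obj ps' q')"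

end

theory Submission
  imports Defs
begin


lemma topspace_real_pre: "topspace (real_pre X) = real_carrier X"
  by (auto simp: real_pre_def real_carrier_def)

lemma istop_realization:
  "istopology (\<lambda>U. U \<subseteq> real_class X act ` real_carrier X \<and>
      openin (real_pre X) {a \<in> real_carrier X. real_class X act a \<in> U})"
  unfolding istopology_def
proof (rule conjI; intro allI impI)
  fix S T assume S: "S \<subseteq> real_class X act ` real_carrier X \<and>
      openin (real_pre X) {a \<in> real_carrier X. real_class X act a \<in> S}"
    and T: "T \<subseteq> real_class X act ` real_carrier X \<and>
      openin (real_pre X) {a \<in> real_carrier X. real_class X act a \<in> T}"
  have "{a \<in> real_carrier X. real_class X act a \<in> S \<inter> T} =
     {a \<in> real_carrier X. real_class X act a \<in> S} \<inter> {a \<in> real_carrier X. real_class X act a \<in> T}"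
    by auto
  with S T show "S \<inter> T \<subseteq> real_class X act ` real_carrier X \<and>
      openin (real_pre X) {a \<in> real_carrier X. real_class X act a \<in> S \<inter> T}"
    by auto
next
  fix K assume K: "\<forall>S\<in>K. S \<subseteq> real_class X act ` real_carrier X \<and>
      openin (real_pre X) {a \<in> real_carrier X. real_class X act a \<in> S}"
  have "{a \<in> real_carrier X. real_class X act a \<in> \<Union>K} =
     \<Union> ((\<lambda>S. {a \<in> real_carrier X. real_class X act a \<in> S}) ` K)"
    by auto
  moreover have "openin (real_pre X) (\<Union> ((\<lambda>S. {a \<in> real_carrier X. real_class X act a \<in> S}) ` K))"
    by (rule openin_Union) (use K in blast)
  ultimately show "\<Union>K \<subseteq> real_class X act ` real_carrier X \<and>
      openin (real_pre X) {a \<in> real_carrier X. real_class X act a \<in> \<Union>K}"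
    using K by (simp only:) blast
qed

lemma openin_realization:
  "openin (realization X act) U \<longleftrightarrow> U \<subseteq> real_class X act ` real_carrier X \<and>
      openin (real_pre X) {a \<in> real_carrier X. real_class X act a \<in> U}"
  by (simp add: realization_def istop_realization)

lemma topspace_realization:
  "topspace (realization X act) = real_class X act ` real_carrier X"
proof -
  have "openin (realization X act) (real_class X act ` real_carrier X)"
    unfolding openin_realization
  proof
    have "{a \<in> real_carrier X. real_class X act a \<in> real_class X act ` real_carrier X} = real_carrier X"
      by auto
    then show "openin (real_pre X) {a \<in> real_carrier X. real_class X act a \<in> real_class X act ` real_carrier X}"
      using openin_topspace[of "real_pre X"] by (simp add: topspace_real_pre)
  qed simp
  then have "real_class X act ` real_carrier X \<subseteq> topspace (realization X act)"
    by (rule openin_subset)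
  moreover have "topspace (realization X act) \<subseteq> real_class X act ` real_carrier X"
    using openin_topspace[of "realization X act"] unfolding openin_realization by blast
  ultimately show ?thesis by blast
qed

lemma quotient_real: "quotient_map (real_pre X) (realization X act) (real_class X act)"
  unfolding quotient_map_def topspace_real_pre topspace_realization openin_realization
  by auto

lemma real_class_self: "a \<in> real_carrier X \<Longrightarrow> a \<in> real_class X act a"
  by (simp add: real_class_def)

lemma eqv_trans: "equivclp R x y \<Longrightarrow> equivclp R y z \<Longrightarrow> equivclp R x z"
  by (rule transpD[OF transp_equivclp])

lemma real_class_eqI: "equivclp (real_rel X act) a b \<Longrightarrow> real_class X act a = real_class X act b"
proof -
  assume ab: "equivclp (real_rel X act) a b"
  then have ba: "equivclp (real_rel X act) b a" by (rule equivclp_sym)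
  have "equivclp (real_rel X act) a c = equivclp (real_rel X act) b c" for c
    using eqv_trans[OF ab, of c] eqv_trans[OF ba, of c] by blast
  then show ?thesis unfolding real_class_def by simp
qed

lemma real_rel_class: "real_rel X act a b \<Longrightarrow> real_class X act a = real_class X act b"
  by (rule real_class_eqI) (unfold equivclp_def, rule r_into_rtranclp, simp add: symclp_def)

lemma real_class_eqD: "real_class X act a = real_class X act b \<Longrightarrow> a \<in> real_carrier X
   \<Longrightarrow> equivclp (real_rel X act) a b"
proof -
  assume "real_class X act a = real_class X act b" "a \<in> real_carrier X"
  then have "a \<in> real_class X act b" using real_class_self[of a X act] by simp
  then show "equivclp (real_rel X act) a b" unfolding real_class_def by (simp add: equivclp_sym)
qed

lemma equivclp_map:
  assumes "\<And>a b. R a b \<Longrightarrow> S (f a) (f b)" and "equivclp R a b"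
  shows "equivclp S (f a) (f b)"
proof -
  have "(symclp R)\<^sup>*\<^sup>* a b" using assms(2) by (simp add: equivclp_def)
  then show ?thesis
  proof (induction rule: rtranclp_induct)
    case base then show ?case by (simp add: equivclp_def)
  next
    case (step y z)
    then have "symclp S (f y) (f z)" using assms(1) by (auto simp: symclp_def)
    then have "equivclp S (f y) (f z)" by (simp add: equivclp_def)
    with step.IH show ?case by (rule eqv_trans)
  qed
qed

definition ssmap :: "(nat \<Rightarrow> 'a set) \<Rightarrow> (nat list \<Rightarrow> 'a \<Rightarrow> 'a)
    \<Rightarrow> (nat \<Rightarrow> 'b set) \<Rightarrow> (nat list \<Rightarrow> 'b \<Rightarrow> 'b) \<Rightarrow> (nat \<Rightarrow> 'a \<Rightarrow> 'b) \<Rightarrow> bool" where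
  "ssmap X actX Y actY F \<longleftrightarrow> (\<forall>k x. x \<in> X k \<longrightarrow> F k x \<in> Y k) \<and>
     (\<forall>k m \<theta> x. \<theta> \<in> mono_list k m \<longrightarrow> x \<in> X m \<longrightarrow> F k (actX \<theta> x) = actY \<theta> (F m x))"

definition Fm :: "(nat \<Rightarrow> 'a \<Rightarrow> 'b) \<Rightarrow> nat \<times> 'a \<times> (nat \<Rightarrow> real) \<Rightarrow> nat \<times> 'b \<times> (nat \<Rightarrow> real)" where
  "Fm F a = (case a of (k, x, t) \<Rightarrow> (k, F k x, t))"

lemma Fm_simp [simp]: "Fm F (k, x, t) = (k, F k x, t)" by (simp add: Fm_def)

lemma rel_Fm:
  assumes "ssmap X actX Y actY F" "real_rel X actX a b"
  shows "real_rel Y actY (Fm F a) (Fm F b)"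
proof -
  from assms(2) obtain k m \<theta> x t where h: "\<theta> \<in> mono_list k m" "x \<in> X m" "t \<in> standard_simplex k"
    "a = (k, actX \<theta> x, t)" "b = (m, x, simplex_map \<theta> t)"
    unfolding real_rel_def by blast
  have "F k (actX \<theta> x) = actY \<theta> (F m x)" "F m x \<in> Y m"
    using assms(1) h unfolding ssmap_def by blast+
  then show ?thesis
    unfolding real_rel_def using h
    by (intro exI[of _ k] exI[of _ m] exI[of _ \<theta>] exI[of _ "F m x"] exI[of _ t]) simp
qed

lemma realize_map_class:
  assumes F: "ssmap X actX Y actY F" and a: "a \<in> real_carrier X"
  shows "realize_map Y actY F (real_class X actX a) = real_class Y actY (Fm F a)"
proof -
  let ?c = "real_class X actX a"
  have "a \<in> ?c" using a by (rule real_class_self)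
  then have b: "(SOME b. b \<in> ?c) \<in> ?c" by (rule someI)
  obtain k x t where kxt: "(SOME b. b \<in> ?c) = (k, x, t)" by (metis prod_cases3)
  have "(k, x, t) \<in> real_class X actX a" using b kxt by simp
  then have "equivclp (real_rel X actX) a (k, x, t)"
    unfolding real_class_def by blast
  then have "equivclp (real_rel Y actY) (Fm F a) (Fm F (k, x, t))"
    by (rule equivclp_map[where f = "Fm F", rotated]) (rule rel_Fm[OF F])
  then have "real_class Y actY (Fm F a) = real_class Y actY (Fm F (k, x, t))"
    by (rule real_class_eqI)
  then show ?thesis
    unfolding realize_map_def kxt by simp
qed

lemma cont_sum_slices:
  assumes "\<And>i. i \<in> I \<Longrightarrow> continuous_map (X i) Z (\<lambda>x. f (i, x))"
  shows "continuous_map (sum_topology X I) Z f"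
  unfolding continuous_map_def
proof (intro conjI allI impI)
  show "f \<in> topspace (sum_topology X I) \<rightarrow> topspace Z"
  proof
    fix p assume "p \<in> topspace (sum_topology X I)"
    then obtain i x where p: "p = (i, x)" "i \<in> I" "x \<in> topspace (X i)" by auto
    show "f p \<in> topspace Z"
      using continuous_map_image_subset_topspace[OF assms[OF p(2)]] p by blast
  qed
next
  fix U assume U: "openin Z U"
  show "openin (sum_topology X I) {x \<in> topspace (sum_topology X I). f x \<in> U}"
    unfolding openin_sum_topology
  proof (intro conjI ballI)
    fix i assume i: "i \<in> I"
    have "{x. (i, x) \<in> {x \<in> topspace (sum_topology X I). f x \<in> U}} = {x \<in> topspace (X i). f (i, x) \<in> U}"
      using i by auto
    then show "openin (X i) {x. (i, x) \<in> {x \<in> topspace (sum_topology X I). f x \<in> U}}"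
      using assms[OF i] U by (simp add: continuous_map_def)
  qed auto
qed

lemma cont_discrete_prod:
  assumes "\<And>x. x \<in> D \<Longrightarrow> continuous_map T Z (\<lambda>t. f (x, t))"
  shows "continuous_map (prod_topology (discrete_topology D) T) Z f"
  unfolding continuous_map_def
proof (intro conjI allI impI)
  show "f \<in> topspace (prod_topology (discrete_topology D) T) \<rightarrow> topspace Z"
  proof
    fix p assume "p \<in> topspace (prod_topology (discrete_topology D) T)"
    then obtain i x where p: "p = (i, x)" "i \<in> D" "x \<in> topspace T" by auto
    show "f p \<in> topspace Z"
      using continuous_map_image_subset_topspace[OF assms[OF p(2)]] p by blast
  qed
next
  fix U assume U: "openin Z U"
  show "openin (prod_topology (discrete_topology D) T)
          {x \<in> topspace (prod_topology (discrete_topology D) T). f x \<in> U}"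
    unfolding openin_prod_topology_alt
  proof (intro allI impI)
    fix x t assume xt: "(x, t) \<in> {x \<in> topspace (prod_topology (discrete_topology D) T). f x \<in> U}"
    then have x: "x \<in> D" by auto
    let ?V = "{t \<in> topspace T. f (x, t) \<in> U}"
    have "openin T ?V" using assms[OF x] U by (simp add: continuous_map_def)
    moreover have "{x} \<times> ?V \<subseteq> {x \<in> topspace (prod_topology (discrete_topology D) T). f x \<in> U}"
      using x by auto
    ultimately show "\<exists>U' V. openin (discrete_topology D) U' \<and> openin T V \<and> x \<in> U' \<and> t \<in> V \<and>
        U' \<times> V \<subseteq> {x \<in> topspace (prod_topology (discrete_topology D) T). f x \<in> U}"
      using xt x by (intro exI[of _ "{x}"] exI[of _ ?V]) auto
  qed
qed

lemma cont_prod_sum: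
  assumes "\<And>i. i \<in> I \<Longrightarrow> continuous_map (prod_topology Z (X i)) W (\<lambda>(z, x). f (z, (i, x)))"
  shows "continuous_map (prod_topology Z (sum_topology X I)) W f"
  unfolding continuous_map_def
proof (intro conjI allI impI)
  show "f \<in> topspace (prod_topology Z (sum_topology X I)) \<rightarrow> topspace W"
  proof
    fix p assume "p \<in> topspace (prod_topology Z (sum_topology X I))"
    then obtain z i x where p: "p = (z, i, x)" "i \<in> I" "x \<in> topspace (X i)" "z \<in> topspace Z" by auto
    have "(z, x) \<in> topspace (prod_topology Z (X i))" using p by simp
    then show "f p \<in> topspace W"
      using continuous_map_image_subset_topspace[OF assms[OF p(2)]] p by force
  qed
next
  fix U assume U: "openin W U"
  show "openin (prod_topology Z (sum_topology X I))
          {x \<in> topspace (prod_topology Z (sum_topology X I)). f x \<in> U}"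
    unfolding openin_prod_topology_alt
  proof (intro allI impI)
    fix z p assume zp: "(z, p) \<in> {x \<in> topspace (prod_topology Z (sum_topology X I)). f x \<in> U}"
    obtain i x where p: "p = (i, x)" by (cases p)
    from zp have "(z, (i, x)) \<in> topspace (prod_topology Z (sum_topology X I))" unfolding p by blast
    then have i: "i \<in> I" and x: "x \<in> topspace (X i)" and z: "z \<in> topspace Z" by simp_all
    let ?P = "{q \<in> topspace (prod_topology Z (X i)). (\<lambda>(z, x). f (z, (i, x))) q \<in> U}"
    have "openin (prod_topology Z (X i)) ?P" using openin_continuous_map_preimage[OF assms[OF i] U] by simp
    moreover have "(z, x) \<in> ?P" using zp p x z by auto
    ultimately have "\<exists>U0 V0. openin Z U0 \<and> openin (X i) V0 \<and> z \<in> U0 \<and> x \<in> V0 \<and> U0 \<times> V0 \<subseteq> ?P"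
      by (rule iffD1[OF openin_prod_topology_alt, rule_format])
    then obtain U0 V0 where UV: "openin Z U0" "openin (X i) V0" "z \<in> U0" "x \<in> V0" "U0 \<times> V0 \<subseteq> ?P"
      by blast
    have "openin (sum_topology X I) (Pair i ` V0)"
      unfolding openin_sum_topology
    proof (intro conjI ballI)
      show "Pair i ` V0 \<subseteq> Sigma I (topspace \<circ> X)" using i openin_subset[OF UV(2)] by auto
      fix j assume "j \<in> I"
      have "{x. (j, x) \<in> Pair i ` V0} = (if j = i then V0 else {})" by auto
      then show "openin (X j) {x. (j, x) \<in> Pair i ` V0}" using UV(2) by simp
    qed
    moreover have "U0 \<times> Pair i ` V0 \<subseteq> {x \<in> topspace (prod_topology Z (sum_topology X I)). f x \<in> U}"
    proof
      fix w assume "w \<in> U0 \<times> Pair i ` V0"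
      then obtain z' x' where w: "w = (z', (i, x'))" "z' \<in> U0" "x' \<in> V0" by blast
      then have "(z', x') \<in> ?P" using UV(5) by blast
      then show "w \<in> {x \<in> topspace (prod_topology Z (sum_topology X I)). f x \<in> U}"
        using w(1) i by simp
    qed
    moreover have "p \<in> Pair i ` V0" using p UV(4) by simp
    ultimately show "\<exists>U' V. openin Z U' \<and> openin (sum_topology X I) V \<and> z \<in> U' \<and> p \<in> V \<and>
        U' \<times> V \<subseteq> {x \<in> topspace (prod_topology Z (sum_topology X I)). f x \<in> U}"
      using UV(1,3) by (intro exI[of _ U0] exI[of _ "Pair i ` V0"]) simp
  qed
qed

lemma cont_prod_discrete:
  assumes "\<And>x. x \<in> D \<Longrightarrow> continuous_map (prod_topology Z T) W (\<lambda>(z, t). f (z, (x, t)))"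
  shows "continuous_map (prod_topology Z (prod_topology (discrete_topology D) T)) W f"
  unfolding continuous_map_def
proof (intro conjI allI impI)
  show "f \<in> topspace (prod_topology Z (prod_topology (discrete_topology D) T)) \<rightarrow> topspace W"
  proof
    fix p assume "p \<in> topspace (prod_topology Z (prod_topology (discrete_topology D) T))"
    then obtain z i x where p: "p = (z, i, x)" "i \<in> D" "x \<in> topspace T" "z \<in> topspace Z" by auto
    have "(z, x) \<in> topspace (prod_topology Z T)" using p by simp
    then show "f p \<in> topspace W"
      using continuous_map_image_subset_topspace[OF assms[OF p(2)]] p by force
  qed
next
  fix U assume U: "openin W U"
  show "openin (prod_topology Z (prod_topology (discrete_topology D) T))
          {x \<in> topspace (prod_topology Z (prod_topology (discrete_topology D) T)). f x \<in> U}"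
    unfolding openin_prod_topology_alt[of Z "prod_topology (discrete_topology D) T"]
  proof (intro allI impI)
    fix z p assume zp: "(z, p) \<in> {x \<in> topspace (prod_topology Z (prod_topology (discrete_topology D) T)). f x \<in> U}"
    obtain x t where p: "p = (x, t)" by (cases p)
    from zp have "(z, (x, t)) \<in> topspace (prod_topology Z (prod_topology (discrete_topology D) T))" unfolding p by blast
    then have x: "x \<in> D" and t: "t \<in> topspace T" and z: "z \<in> topspace Z" by simp_all
    let ?P = "{q \<in> topspace (prod_topology Z T). (\<lambda>(z, t). f (z, (x, t))) q \<in> U}"
    have "openin (prod_topology Z T) ?P" using openin_continuous_map_preimage[OF assms[OF x] U] by simp
    moreover have "(z, t) \<in> ?P" using zp p t z by auto
    ultimately have "\<exists>U0 V0. openin Z U0 \<and> openin T V0 \<and> z \<in> U0 \<and> t \<in> V0 \<and> U0 \<times> V0 \<subseteq> ?P"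
      by (rule iffD1[OF openin_prod_topology_alt, rule_format])
    then obtain U0 V0 where UV: "openin Z U0" "openin T V0" "z \<in> U0" "t \<in> V0" "U0 \<times> V0 \<subseteq> ?P"
      by blast
    have "openin (prod_topology (discrete_topology D) T) ({x} \<times> V0)"
      using UV(2) x by (simp add: openin_prod_Times_iff)
    moreover have "U0 \<times> ({x} \<times> V0) \<subseteq> {x \<in> topspace (prod_topology Z (prod_topology (discrete_topology D) T)). f x \<in> U}"
    proof
      fix w assume "w \<in> U0 \<times> ({x} \<times> V0)"
      then obtain z' t' where w: "w = (z', (x, t'))" "z' \<in> U0" "t' \<in> V0" by blast
      then have "(z', t') \<in> ?P" using UV(5) by blast
      then show "w \<in> {x \<in> topspace (prod_topology Z (prod_topology (discrete_topology D) T)). f x \<in> U}"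
        using w(1) x by simp
    qed
    moreover have "p \<in> {x} \<times> V0" using p UV(4) by simp
    ultimately show "\<exists>U' V. openin Z U' \<and> openin (prod_topology (discrete_topology D) T) V \<and> z \<in> U' \<and> p \<in> V \<and>
        U' \<times> V \<subseteq> {x \<in> topspace (prod_topology Z (prod_topology (discrete_topology D) T)). f x \<in> U}"
      using UV(1,3) by (intro exI[of _ U0] exI[of _ "{x} \<times> V0"]) simp
  qed
qed

lemma class_cont:
  assumes y: "y \<in> Y k"
  shows "continuous_map (subtopology (powertop_real UNIV) (standard_simplex k)) (realization Y act)
           (\<lambda>t. real_class Y act (k, y, t))"
proof -
  have 1: "continuous_map (subtopology (powertop_real UNIV) (standard_simplex k))
      (prod_topology (discrete_topology (Y k)) (subtopology (powertop_real UNIV) (standard_simplex k)))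
      (\<lambda>t. (y, t))"
    using y by (intro continuous_map_pairedI) auto
  have 2: "continuous_map
      (prod_topology (discrete_topology (Y k)) (subtopology (powertop_real UNIV) (standard_simplex k)))
      (real_pre Y) (\<lambda>p. (k, p))"
    unfolding real_pre_def by (rule continuous_map_component_injection) simp
  have 3: "continuous_map (real_pre Y) (realization Y act) (real_class Y act)"
    by (rule quotient_imp_continuous_map[OF quotient_real])
  show ?thesis
    using continuous_map_compose[OF continuous_map_compose[OF 1 2] 3] by (simp add: o_def)
qed

lemma cont_from_realization:
  assumes "\<And>k x. x \<in> X k \<Longrightarrow> continuous_map (subtopology (powertop_real UNIV) (standard_simplex k)) Z
             (\<lambda>t. g (real_class X act (k, x, t)))"
  shows "continuous_map (realization X act) Z g"
proof (rule continuous_compose_quotient_map[OF quotient_real])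
  show "continuous_map (real_pre X) Z (g \<circ> real_class X act)"
    unfolding real_pre_def
    by (intro cont_sum_slices cont_discrete_prod) (use assms in \<open>auto simp: o_def\<close>)
qed

lemma realize_map_cont:
  assumes F: "ssmap X actX Y actY F"
  shows "continuous_map (realization X actX) (realization Y actY) (realize_map Y actY F)"
proof (rule cont_from_realization)
  fix k x assume x: "x \<in> X k"
  have "continuous_map (subtopology (powertop_real UNIV) (standard_simplex k)) (realization Y actY)
           (\<lambda>t. real_class Y actY (k, F k x, t))"
    using F x by (intro class_cont) (auto simp: ssmap_def)
  then show "continuous_map (subtopology (powertop_real UNIV) (standard_simplex k)) (realization Y actY)
           (\<lambda>t. realize_map Y actY F (real_class X actX (k, x, t)))"
  proof (rule continuous_map_eq)
    fix t assume "t \<in> topspace (subtopology (powertop_real UNIV) (standard_simplex k))"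
    then have "(k, x, t) \<in> real_carrier X" using x by (simp add: real_carrier_def)
    then show "real_class Y actY (k, F k x, t) = realize_map Y actY F (real_class X actX (k, x, t))"
      by (simp add: realize_map_class[OF F])
  qed
qed


lemma sph_base_in: "sph_base \<in> topspace (nsphere k)"
  using in_topspace_nsphere[of k] by (simp add: sph_base_def)

lemma homotopic_withI':
  assumes h: "continuous_map (prod_topology (top_of_set {0..1::real}) X) Y h"
    and h0: "\<And>x. x \<in> topspace X \<Longrightarrow> h (0, x) = f x"
    and h1: "\<And>x. x \<in> topspace X \<Longrightarrow> h (1, x) = g x"
    and hb: "\<And>t. t \<in> {0..1::real} \<Longrightarrow> h (t, b) = c" and b: "b \<in> topspace X"
  shows "homotopic_with (\<lambda>k. k b = c) X Y f g"
proof -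
  define h' where "h' z = (if snd z \<in> topspace X then h z else if fst z = 0 then f (snd z) else g (snd z))" for z
  show ?thesis unfolding homotopic_with_def
  proof (intro exI conjI allI ballI)
    show "continuous_map (prod_topology (top_of_set {0..1::real}) X) Y h'"
      by (rule continuous_map_eq[OF h]) (auto simp: h'_def)
  next
    fix x show "h' (0, x) = f x" using h0 by (simp add: h'_def)
  next
    fix x show "h' (1, x) = g x" using h1 by (simp add: h'_def)
  next
    fix t :: real assume "t \<in> {0..1}"
    then show "h' (t, b) = c" using hb b by (simp add: h'_def)
  qed
qed

lemma weq_retract:
  assumes g: "continuous_map A B g" and r: "continuous_map B A r"
    and rg: "\<And>x. x \<in> topspace A \<Longrightarrow> r (g x) = x"
    and H: "continuous_map (prod_topology (top_of_set {0..1::real}) B) B H"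
    and H0: "\<And>y. y \<in> topspace B \<Longrightarrow> H (0, y) = g (r y)"
    and H1: "\<And>y. y \<in> topspace B \<Longrightarrow> H (1, y) = y"
    and Hfix: "\<And>x s. x \<in> topspace A \<Longrightarrow> s \<in> {0..1} \<Longrightarrow> H (s, g x) = g x"
  shows "weak_homotopy_equivalence A B g"
  unfolding weak_homotopy_equivalence_def
proof (intro conjI allI ballI impI)
  show "continuous_map A B g" by (rule g)
next
  fix k x0 \<beta> assume x0: "x0 \<in> topspace A"
    and \<beta>: "continuous_map (nsphere k) B \<beta> \<and> \<beta> sph_base = g x0"
  have base: "sph_base \<in> topspace (nsphere k)" by (rule sph_base_in)
  let ?h = "\<lambda>z. H (fst z, \<beta> (snd z))"
  have ch: "continuous_map (prod_topology (top_of_set {0..1::real}) (nsphere k)) B ?h"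
  proof -
    have "continuous_map (prod_topology (top_of_set {0..1::real}) (nsphere k))
            (prod_topology (top_of_set {0..1::real}) B) (\<lambda>z. (fst z, \<beta> (snd z)))"
    proof -
      have "continuous_map (prod_topology (top_of_set {0..1::real}) (nsphere k)) B (\<beta> \<circ> snd)"
        using continuous_map_compose[OF continuous_map_snd conjunct1[OF \<beta>]] .
      then show ?thesis unfolding continuous_map_paired by (simp add: o_def continuous_map_fst)
    qed
    then show ?thesis using continuous_map_compose[OF _ H] by (simp add: o_def)
  qed
  have "homotopic_with (\<lambda>h. h sph_base = g x0) (nsphere k) B (g \<circ> (r \<circ> \<beta>)) \<beta>"
  proof (rule homotopic_withI'[OF ch _ _ _ base])
    fix x assume "x \<in> topspace (nsphere k)"
    then have "\<beta> x \<in> topspace B" using \<beta> continuous_map_image_subset_topspace by blast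
    then show "?h (0, x) = (g \<circ> (r \<circ> \<beta>)) x" "?h (1, x) = \<beta> x" using H0 H1 by simp_all
  next
    fix t :: real assume "t \<in> {0..1}"
    then show "?h (t, sph_base) = g x0" using \<beta> Hfix[OF x0] by simp
  qed
  moreover have "continuous_map (nsphere k) A (r \<circ> \<beta>)"
    using \<beta> r by (intro continuous_map_compose) auto
  moreover have "(r \<circ> \<beta>) sph_base = x0" using \<beta> rg[OF x0] by simp
  ultimately show "\<exists>\<alpha>. continuous_map (nsphere k) A \<alpha> \<and> \<alpha> sph_base = x0 \<and>
      homotopic_with (\<lambda>h. h sph_base = g x0) (nsphere k) B (g \<circ> \<alpha>) \<beta>"
    by blast
next
  fix k x0 \<alpha>1 \<alpha>2 assume x0: "x0 \<in> topspace A"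
    and a: "continuous_map (nsphere k) A \<alpha>1 \<and> \<alpha>1 sph_base = x0 \<and>
       continuous_map (nsphere k) A \<alpha>2 \<and> \<alpha>2 sph_base = x0 \<and>
       homotopic_with (\<lambda>h. h sph_base = g x0) (nsphere k) B (g \<circ> \<alpha>1) (g \<circ> \<alpha>2)"
  have base: "sph_base \<in> topspace (nsphere k)" by (rule sph_base_in)
  have Pg: "\<And>h k'. (\<And>x. x \<in> topspace (nsphere k) \<Longrightarrow> h x = k' x) \<Longrightarrow> (h sph_base = g x0) = (k' sph_base = g x0)"
    using base by simp
  have Pext: "\<And>h k'. (\<And>x. x \<in> topspace (nsphere k) \<Longrightarrow> h x = k' x) \<Longrightarrow> (h sph_base = x0) = (k' sph_base = x0)"
    using base by simp
  have "homotopic_with (\<lambda>h. h sph_base = g x0) (nsphere k) B (g \<circ> \<alpha>1) (g \<circ> \<alpha>2)" using a by blast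
  then obtain h0 where h0: "continuous_map (prod_topology (top_of_set {0..1::real}) (nsphere k)) B h0"
    "\<And>x. x \<in> topspace (nsphere k) \<Longrightarrow> h0 (0, x) = (g \<circ> \<alpha>1) x"
    "\<And>x. x \<in> topspace (nsphere k) \<Longrightarrow> h0 (1, x) = (g \<circ> \<alpha>2) x"
    "\<And>t. t \<in> {0..1::real} \<Longrightarrow> h0 (t, sph_base) = g x0"
    unfolding homotopic_with_def by blast
  show "homotopic_with (\<lambda>h. h sph_base = x0) (nsphere k) A \<alpha>1 \<alpha>2"
  proof (rule homotopic_withI'[OF _ _ _ _ base])
    show "continuous_map (prod_topology (top_of_set {0..1::real}) (nsphere k)) A (r \<circ> h0)"
      using h0(1) r by (rule continuous_map_compose)
  next
    fix x assume x: "x \<in> topspace (nsphere k)"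
    then have "\<alpha>1 x \<in> topspace A" "\<alpha>2 x \<in> topspace A"
      using a continuous_map_image_subset_topspace by blast+
    then show "(r \<circ> h0) (0, x) = \<alpha>1 x" "(r \<circ> h0) (1, x) = \<alpha>2 x"
      using h0(2,3)[OF x] rg by simp_all
  next
    fix t :: real assume "t \<in> {0..1}"
    then show "(r \<circ> h0) (t, sph_base) = x0" using h0(4) rg[OF x0] by simp
  qed
qed


lemma mono_list_D:
  assumes "\<theta> \<in> mono_list k m"
  shows "length \<theta> = Suc k" "\<And>i. i \<le> k \<Longrightarrow> \<theta> ! i \<le> m"
    "\<And>i j. i \<le> j \<Longrightarrow> j \<le> k \<Longrightarrow> \<theta> ! i \<le> \<theta> ! j"
  using assms unfolding mono_list_def
  by (auto simp: sorted_iff_nth_mono less_Suc_eq_le)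

lemma mono_list_I:
  assumes "length \<theta> = Suc k" "\<And>i. i \<le> k \<Longrightarrow> \<theta> ! i \<le> m"
    "\<And>i j. i \<le> j \<Longrightarrow> j \<le> k \<Longrightarrow> \<theta> ! i \<le> \<theta> ! j"
  shows "\<theta> \<in> mono_list k m"
  using assms unfolding mono_list_def
  by (auto simp: sorted_iff_nth_mono less_Suc_eq_le in_set_conv_nth)

lemma mono_list_map:
  assumes "\<And>i. i \<le> k \<Longrightarrow> F i \<le> m" "\<And>i j. i \<le> j \<Longrightarrow> j \<le> k \<Longrightarrow> F i \<le> F j"
  shows "map F [0..<Suc k] \<in> mono_list k m"
  by (rule mono_list_I) (use assms in \<open>auto simp del: upt_Suc simp: nth_append\<close>)

lemma leq_iff: "leq (xs, y) (xs', y') \<longleftrightarrow> length xs = length xs' \<and> (\<forall>i<length xs. xs ! i \<le> xs' ! i) \<and> y \<le> y'"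
  by (simp add: leq_def list_all2_conv_all_nth)

lemma in_w_iff: "in_w a b \<longleftrightarrow> leq a b \<and> fst a = fst b"
  by (simp add: in_w_def)

lemma Obj_iff: "(xs, y) \<in> Obj pp k \<longleftrightarrow> length xs = length pp \<and> (\<forall>i<length pp. xs ! i \<le> pp ! i) \<and> y \<le> k"
  by (simp add: Obj_def)

lemma NK_simpD:
  assumes "f \<in> NK_simp ps q pp k"
  shows "f \<in> extensional (Obj pp k)"
    "\<And>a. a \<in> Obj pp k \<Longrightarrow> f a \<in> Obj ps q"
    "\<And>a b. a \<in> Obj pp k \<Longrightarrow> b \<in> Obj pp k \<Longrightarrow> leq a b \<Longrightarrow> leq (f a) (f b)"
    "\<And>a b. a \<in> Obj pp k \<Longrightarrow> b \<in> Obj pp k \<Longrightarrow> in_w a b \<Longrightarrow> in_w (f a) (f b)"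
    "\<And>i a b. i < length ps \<Longrightarrow> a \<in> Obj pp k \<Longrightarrow> b \<in> Obj pp k \<Longrightarrow> in_v i a b \<Longrightarrow> in_v i (f a) (f b)"
  using assms unfolding NK_simp_def by blast+

lemma NK_simpI:
  assumes "f \<in> extensional (Obj pp k)"
    "\<And>a. a \<in> Obj pp k \<Longrightarrow> f a \<in> Obj ps q"
    "\<And>a b. a \<in> Obj pp k \<Longrightarrow> b \<in> Obj pp k \<Longrightarrow> leq a b \<Longrightarrow> leq (f a) (f b)"
    "\<And>a b. a \<in> Obj pp k \<Longrightarrow> b \<in> Obj pp k \<Longrightarrow> in_w a b \<Longrightarrow> in_w (f a) (f b)"
    "\<And>i a b. i < length ps \<Longrightarrow> a \<in> Obj pp k \<Longrightarrow> b \<in> Obj pp k \<Longrightarrow> in_v i a b \<Longrightarrow> in_v i (f a) (f b)"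
  shows "f \<in> NK_simp ps q pp k"
  using assms unfolding NK_simp_def by blast


lemma mono_list_DS:
  assumes "\<theta> \<in> mono_list k m" "i < Suc k"
  shows "\<theta> ! i \<le> m"
  using mono_list_D(2)[OF assms(1)] assms(2) by simp

lemma unit_val:
  "(xs, y) \<in> Obj pp k \<Longrightarrow> unit_Delta ps q pp k (\<alpha>s, \<beta>) (xs, y) =
     (map (\<lambda>i. \<alpha>s ! i ! (xs ! i)) [0..<length pp], \<beta> ! y)"
  by (simp add: unit_Delta_def Obj_iff)

lemma Delta_simpD:
  assumes "(\<alpha>s, \<beta>) \<in> Delta_simp ps q pp k"
  shows "length \<alpha>s = length ps" "\<And>i. i < length ps \<Longrightarrow> \<alpha>s ! i \<in> mono_list (pp ! i) (ps ! i)"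
    "\<beta> \<in> mono_list k q"
  using assms by (auto simp: Delta_simp_def)

lemma unit_in:
  assumes len: "length pp = length ps" and x: "x \<in> Delta_simp ps q pp k"
  shows "unit_Delta ps q pp k x \<in> NK_simp ps q pp k"
proof -
  obtain \<alpha>s \<beta> where xe: "x = (\<alpha>s, \<beta>)" by (cases x)
  note D = Delta_simpD[OF x[unfolded xe]]
  have v: "unit_Delta ps q pp k x (xs, y) = (map (\<lambda>i. \<alpha>s ! i ! (xs ! i)) [0..<length pp], \<beta> ! y)"
    if "(xs, y) \<in> Obj pp k" for xs y
    using unit_val[OF that] xe by simp
  have am: "\<alpha>s ! i ! a \<le> \<alpha>s ! i ! b" if "i < length pp" "a \<le> b" "b \<le> pp ! i" for i a b
    using mono_list_D(3)[OF D(2)] that len by simp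
  have ab: "\<alpha>s ! i ! a \<le> ps ! i" if "i < length pp" "a \<le> pp ! i" for i a
    using mono_list_D(2)[OF D(2)] that len by simp
  show ?thesis
  proof (rule NK_simpI)
    show "unit_Delta ps q pp k x \<in> extensional (Obj pp k)" by (simp add: unit_Delta_def)
  next
    fix a assume a: "a \<in> Obj pp k"
    obtain xs y where ae: "a = (xs, y)" by (cases a)
    with a have "length xs = length pp" "\<forall>i<length pp. xs ! i \<le> pp ! i" "y \<le> k" by (simp_all add: Obj_iff)
    then show "unit_Delta ps q pp k x a \<in> Obj ps q"
      unfolding ae v[OF a[unfolded ae]] Obj_iff using len ab mono_list_D(2)[OF D(3)] by auto
  next
    fix a b assume a: "a \<in> Obj pp k" and b: "b \<in> Obj pp k" and ab': "leq a b"
    obtain xs y where ae: "a = (xs, y)" by (cases a)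
    obtain xs' y' where be: "b = (xs', y')" by (cases b)
    from a b ab' show "leq (unit_Delta ps q pp k x a) (unit_Delta ps q pp k x b)"
      unfolding ae be v[OF a[unfolded ae]] v[OF b[unfolded be]]
      using am mono_list_D(3)[OF D(3)] by (auto simp: Obj_iff leq_iff)
  next
    fix a b assume a: "a \<in> Obj pp k" and b: "b \<in> Obj pp k" and ab': "in_w a b"
    obtain xs y where ae: "a = (xs, y)" by (cases a)
    obtain xs' y' where be: "b = (xs', y')" by (cases b)
    from a b ab' show "in_w (unit_Delta ps q pp k x a) (unit_Delta ps q pp k x b)"
      unfolding ae be v[OF a[unfolded ae]] v[OF b[unfolded be]] in_w_iff
      using am mono_list_D(3)[OF D(3)] by (auto simp: Obj_iff leq_iff)
  next
    fix i a b assume i: "i < length ps" and a: "a \<in> Obj pp k" and b: "b \<in> Obj pp k" and ab': "in_v i a b"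
    obtain xs y where ae: "a = (xs, y)" by (cases a)
    obtain xs' y' where be: "b = (xs', y')" by (cases b)
    from a b ab' show "in_v i (unit_Delta ps q pp k x a) (unit_Delta ps q pp k x b)"
      unfolding ae be v[OF a[unfolded ae]] v[OF b[unfolded be]] in_v_def
      using am mono_list_D(3)[OF D(3)] by (auto simp: Obj_iff leq_iff)
  qed
qed

lemma NK_act_val:
  assumes "\<theta> \<in> mono_list k m" "(xs, y) \<in> Obj pp k"
  shows "NK_act pp \<theta> f (xs, y) = f (xs, \<theta> ! y)"
  using assms mono_list_D(1)[OF assms(1)] by (simp add: NK_act_def)

lemma NK_act_ext: "\<theta> \<in> mono_list k m \<Longrightarrow> NK_act pp \<theta> f \<in> extensional (Obj pp k)"
  using mono_list_D(1) by (simp add: NK_act_def)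

lemma unit_nat:
  assumes th: "\<theta> \<in> mono_list k m" and x: "x \<in> Delta_simp ps q pp m"
  shows "unit_Delta ps q pp k (Delta_act pp \<theta> x) = NK_act pp \<theta> (unit_Delta ps q pp m x)"
proof (rule extensionalityI[OF _ NK_act_ext[OF th]])
  show "unit_Delta ps q pp k (Delta_act pp \<theta> x) \<in> extensional (Obj pp k)" by (simp add: unit_Delta_def)
next
  fix a assume a: "a \<in> Obj pp k"
  obtain xs y where ae: "a = (xs, y)" by (cases a)
  obtain \<alpha>s \<beta> where xe: "x = (\<alpha>s, \<beta>)" by (cases x)
  have y: "y \<le> k" using a ae by (simp add: Obj_iff)
  have "(xs, \<theta> ! y) \<in> Obj pp m" using a ae mono_list_D(2)[OF th y] by (simp add: Obj_iff)
  then show "unit_Delta ps q pp k (Delta_act pp \<theta> x) a = NK_act pp \<theta> (unit_Delta ps q pp m x) a"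
    unfolding ae NK_act_val[OF th a[unfolded ae]] xe Delta_act_def
    using unit_val[OF a[unfolded ae]] unit_val mono_list_D(1)[OF th] y by simp
qed

definition rmap :: "nat list \<Rightarrow> nat \<Rightarrow> (nat list \<times> nat \<Rightarrow> nat list \<times> nat) \<Rightarrow> nat list list \<times> nat list" where
  "rmap pp k f = (map (\<lambda>i. map (\<lambda>j. fst (f ((replicate (length pp) 0)[i := j], 0)) ! i) [0..<Suc (pp ! i)])
       [0..<length pp], map (\<lambda>y. snd (f (replicate (length pp) 0, y))) [0..<Suc k])"

lemma e_Obj: "i < length pp \<Longrightarrow> j \<le> pp ! i \<Longrightarrow> y \<le> k \<Longrightarrow> ((replicate (length pp) 0)[i := j], y) \<in> Obj pp k"
  by (auto simp: Obj_iff nth_list_update)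

lemma z_Obj: "y \<le> k \<Longrightarrow> (replicate (length pp) 0, y) \<in> Obj pp k"
  by (auto simp: Obj_iff)

lemma Obj_ps: "(zs, z) \<in> Obj ps q \<Longrightarrow> i < length ps \<Longrightarrow> zs ! i \<le> ps ! i"
  by (simp add: Obj_iff)

lemma rmap_in:
  assumes len: "length pp = length ps" and f: "f \<in> NK_simp ps q pp k"
  shows "rmap pp k f \<in> Delta_simp ps q pp k"
proof -
  note F = NK_simpD[OF f]
  have A: "map (\<lambda>j. fst (f ((replicate (length pp) 0)[i := j], 0)) ! i) [0..<Suc (pp ! i)] \<in> mono_list (pp ! i) (ps ! i)"
    if i: "i < length ps" for i
  proof (rule mono_list_map)
    have ip: "i < length pp" using i len by simp
    fix j assume j: "j \<le> pp ! i"
    have "f ((replicate (length pp) 0)[i := j], 0) \<in> Obj ps q" using F(2)[OF e_Obj[OF ip j, of 0 k]] by simp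
    then show "fst (f ((replicate (length pp) 0)[i := j], 0)) ! i \<le> ps ! i"
      using i by (cases "f ((replicate (length pp) 0)[i := j], 0)") (simp add: Obj_iff)
  next
    fix j j' assume jj: "j \<le> j'" "j' \<le> pp ! i"
    have ip: "i < length pp" using i len by simp
    have o1: "((replicate (length pp) 0)[i := j], 0) \<in> Obj pp k" using e_Obj[OF ip] jj by simp
    have o2: "((replicate (length pp) 0)[i := j'], 0) \<in> Obj pp k" using e_Obj[OF ip] jj by simp
    have "leq (f ((replicate (length pp) 0)[i := j], 0)) (f ((replicate (length pp) 0)[i := j'], 0))"
      using F(3)[OF o1 o2] ip jj by (simp add: leq_iff nth_list_update)
    moreover have "f ((replicate (length pp) 0)[i := j], 0) \<in> Obj ps q" using F(2)[OF o1] .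
    ultimately show "fst (f ((replicate (length pp) 0)[i := j], 0)) ! i \<le> fst (f ((replicate (length pp) 0)[i := j'], 0)) ! i"
      using i by (auto simp: leq_def list_all2_conv_all_nth Obj_def)
  qed
  have B: "map (\<lambda>y. snd (f (replicate (length pp) 0, y))) [0..<Suc k] \<in> mono_list k q"
  proof (rule mono_list_map)
    fix y assume y: "y \<le> k"
    have "f (replicate (length pp) 0, y) \<in> Obj ps q" using F(2) z_Obj y by simp
    then show "snd (f (replicate (length pp) 0, y)) \<le> q" by (auto simp: Obj_def)
  next
    fix y y' assume yy: "y \<le> y'" "y' \<le> k"
    have "leq (f (replicate (length pp) 0, y)) (f (replicate (length pp) 0, y'))"
      using F(3) z_Obj yy by (simp add: leq_iff)
    then show "snd (f (replicate (length pp) 0, y)) \<le> snd (f (replicate (length pp) 0, y'))"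
      by (simp add: leq_def)
  qed
  show ?thesis unfolding rmap_def Delta_simp_def using A B len by simp
qed


lemma f_Obj_len: "(zs, z) \<in> Obj ps q \<Longrightarrow> length zs = length ps"
  by (simp add: Obj_iff)

lemma rmap_nat:
  assumes len: "length pp = length ps" and th: "\<theta> \<in> mono_list k m" and f: "f \<in> NK_simp ps q pp m"
  shows "rmap pp k (NK_act pp \<theta> f) = Delta_act pp \<theta> (rmap pp m f)"
proof -
  note F = NK_simpD[OF f]
  have A: "fst (NK_act pp \<theta> f ((replicate (length pp) 0)[i := j], 0)) ! i
         = fst (f ((replicate (length pp) 0)[i := j], 0)) ! i" if i: "i < length pp" and j: "j \<le> pp ! i" for i j
  proof -
    have o0: "((replicate (length pp) 0)[i := j], 0) \<in> Obj pp k" using e_Obj[OF i j] by simp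
    have o1: "((replicate (length pp) 0)[i := j], 0) \<in> Obj pp m" using e_Obj[OF i j] by simp
    have t0: "\<theta> ! 0 \<le> m" using mono_list_D(2)[OF th] by simp
    have o2: "((replicate (length pp) 0)[i := j], \<theta> ! 0) \<in> Obj pp m" using e_Obj[OF i j t0] .
    have "in_w (f ((replicate (length pp) 0)[i := j], 0)) (f ((replicate (length pp) 0)[i := j], \<theta> ! 0))"
      using F(4)[OF o1 o2] by (simp add: in_w_iff leq_iff)
    then show ?thesis using NK_act_val[OF th o0] by (simp add: in_w_iff)
  qed
  have B: "snd (NK_act pp \<theta> f (replicate (length pp) 0, y)) = snd (f (replicate (length pp) 0, \<theta> ! y))"
    if "y \<le> k" for y
    using NK_act_val[OF th z_Obj[OF that]] by simp
  have C: "map (\<lambda>y. snd (NK_act pp \<theta> f (replicate (length pp) 0, y))) [0..<Suc k]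
     = map ((!) (map (\<lambda>y. snd (f (replicate (length pp) 0, y))) [0..<Suc m])) \<theta>"
  proof (rule nth_equalityI)
    show "length (map (\<lambda>y. snd (NK_act pp \<theta> f (replicate (length pp) 0, y))) [0..<Suc k]) =
      length (map ((!) (map (\<lambda>y. snd (f (replicate (length pp) 0, y))) [0..<Suc m])) \<theta>)"
      using mono_list_D(1)[OF th] by simp
  next
    fix y assume "y < length (map (\<lambda>y. snd (NK_act pp \<theta> f (replicate (length pp) 0, y))) [0..<Suc k])"
    then have y: "y \<le> k" by simp
    have "\<theta> ! y < Suc m" using mono_list_D(2)[OF th y] by simp
    then show "map (\<lambda>y. snd (NK_act pp \<theta> f (replicate (length pp) 0, y))) [0..<Suc k] ! y =
        map ((!) (map (\<lambda>y. snd (f (replicate (length pp) 0, y))) [0..<Suc m])) \<theta> ! y"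
      using B[OF y] y mono_list_D(1)[OF th] by (simp del: upt_Suc)
  qed
  show ?thesis
    unfolding rmap_def Delta_act_def using A C by (simp del: upt_Suc)
qed

lemma rmap_unit:
  assumes len: "length pp = length ps" and x: "x \<in> Delta_simp ps q pp k"
  shows "rmap pp k (unit_Delta ps q pp k x) = x"
proof -
  obtain \<alpha>s \<beta> where xe: "x = (\<alpha>s, \<beta>)" by (cases x)
  note D = Delta_simpD[OF x[unfolded xe]]
  have A: "map (\<lambda>i. map (\<lambda>j. fst (unit_Delta ps q pp k x ((replicate (length pp) 0)[i := j], 0)) ! i)
      [0..<Suc (pp ! i)]) [0..<length pp] = \<alpha>s"
  proof (rule nth_equalityI)
    show "length (map (\<lambda>i. map (\<lambda>j. fst (unit_Delta ps q pp k x ((replicate (length pp) 0)[i := j], 0)) ! i)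
      [0..<Suc (pp ! i)]) [0..<length pp]) = length \<alpha>s" using D(1) len by simp
  next
    fix i assume "i < length (map (\<lambda>i. map (\<lambda>j. fst (unit_Delta ps q pp k x ((replicate (length pp) 0)[i := j], 0)) ! i)
      [0..<Suc (pp ! i)]) [0..<length pp])"
    then have i: "i < length pp" by simp
    have al: "length (\<alpha>s ! i) = Suc (pp ! i)" using mono_list_D(1)[OF D(2)] i len by simp
    have "map (\<lambda>j. fst (unit_Delta ps q pp k x ((replicate (length pp) 0)[i := j], 0)) ! i) [0..<Suc (pp ! i)] = \<alpha>s ! i"
    proof (rule nth_equalityI)
      fix j assume "j < length (map (\<lambda>j. fst (unit_Delta ps q pp k x ((replicate (length pp) 0)[i := j], 0)) ! i) [0..<Suc (pp ! i)])"
      then have j: "j \<le> pp ! i" by simp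
      show "map (\<lambda>j. fst (unit_Delta ps q pp k x ((replicate (length pp) 0)[i := j], 0)) ! i) [0..<Suc (pp ! i)] ! j = \<alpha>s ! i ! j"
        using unit_val[OF e_Obj[OF i j, of 0 k]] xe i j by (simp del: upt_Suc add: nth_list_update)
    qed (simp add: al)
    then show "map (\<lambda>i. map (\<lambda>j. fst (unit_Delta ps q pp k x ((replicate (length pp) 0)[i := j], 0)) ! i)
      [0..<Suc (pp ! i)]) [0..<length pp] ! i = \<alpha>s ! i" using i by simp
  qed
  have B: "map (\<lambda>y. snd (unit_Delta ps q pp k x (replicate (length pp) 0, y))) [0..<Suc k] = \<beta>"
  proof (rule nth_equalityI)
    show "length (map (\<lambda>y. snd (unit_Delta ps q pp k x (replicate (length pp) 0, y))) [0..<Suc k]) = length \<beta>"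
      using mono_list_D(1)[OF D(3)] by simp
  next
    fix y assume "y < length (map (\<lambda>y. snd (unit_Delta ps q pp k x (replicate (length pp) 0, y))) [0..<Suc k])"
    then have y: "y \<le> k" by simp
    then show "map (\<lambda>y. snd (unit_Delta ps q pp k x (replicate (length pp) 0, y))) [0..<Suc k] ! y = \<beta> ! y"
      using unit_val[OF z_Obj[OF y]] xe by (simp del: upt_Suc)
  qed
  show ?thesis unfolding rmap_def using A B xe by simp
qed

lemma coord:
  assumes len: "length pp = length ps" and f: "f \<in> NK_simp ps q pp k"
    and a: "(xs, y) \<in> Obj pp k" and i: "i < length pp"
  shows "fst (f (xs, y)) ! i = fst (f ((replicate (length pp) 0)[i := xs ! i], 0)) ! i"
proof -
  note F = NK_simpD[OF f]
  have xs: "length xs = length pp" "\<And>l. l < length pp \<Longrightarrow> xs ! l \<le> pp ! l" "y \<le> k"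
    using a by (auto simp: Obj_iff)
  define u where "u d = map (\<lambda>l. if l < d \<or> l = i then xs ! l else 0) [0..<length pp]" for d
  have u0: "u 0 = (replicate (length pp) 0)[i := xs ! i]"
    unfolding u_def by (rule nth_equalityI) (auto simp: nth_list_update)
  have uN: "u (length pp) = xs"
    unfolding u_def by (rule nth_equalityI) (auto simp: xs(1))
  have uO: "(u d, 0) \<in> Obj pp k" for d
    using xs by (auto simp: u_def Obj_iff)
  have un: "l < length pp \<Longrightarrow> u d ! l = (if l < d \<or> l = i then xs ! l else 0)" for d l
    by (simp add: u_def)
  have ul: "length (u d) = length pp" for d by (simp add: u_def)
  have step: "fst (f (u (Suc d), 0)) ! i = fst (f (u d, 0)) ! i" for d
  proof (cases "d < length pp \<and> d \<noteq> i")
    case True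
    have le: "u d ! l \<le> u (Suc d) ! l" if "l < length pp" for l
      using un[OF that, of d] un[OF that, of "Suc d"] by simp
    have eq: "u d ! l = u (Suc d) ! l" if "l < length pp" "l \<noteq> d" for l
      using un[OF that(1), of d] un[OF that(1), of "Suc d"] that(2) by (simp add: less_Suc_eq)
    have "in_v d (u d, 0) (u (Suc d), 0)"
      unfolding in_v_def leq_iff using le eq ul by simp
    then have "in_v d (f (u d, 0)) (f (u (Suc d), 0))"
      using F(5)[OF _ uO uO] True len by simp
    then have V: "\<forall>j<length (fst (f (u d, 0))). j \<noteq> d \<longrightarrow> fst (f (u d, 0)) ! j = fst (f (u (Suc d), 0)) ! j"
      unfolding in_v_def by blast
    have "length (fst (f (u d, 0))) = length ps"
      using F(2)[OF uO[of d]] by (cases "f (u d, 0)") (simp add: Obj_iff)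
    then have "i < length (fst (f (u d, 0)))" using i len by simp
    then show ?thesis using V True by simp
  next
    case False
    have "u (Suc d) = u d"
    proof (rule nth_equalityI)
      fix l assume "l < length (u (Suc d))"
      then have l: "l < length pp" by (simp add: ul)
      show "u (Suc d) ! l = u d ! l" using un[OF l, of d] un[OF l, of "Suc d"] False l
        by (auto simp: less_Suc_eq)
    qed (simp add: ul)
    then show ?thesis by simp
  qed
  have D: "fst (f (u d, 0)) ! i = fst (f (u 0, 0)) ! i" for d
  proof (induction d)
    case (Suc d) then show ?case using step[of d] by simp
  qed simp
  have 1: "fst (f (xs, 0)) ! i = fst (f ((replicate (length pp) 0)[i := xs ! i], 0)) ! i"
    using D[of "length pp"] uN u0 by simp
  have o0: "(xs, 0) \<in> Obj pp k" using a by (simp add: Obj_iff)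
  have "in_w (xs, 0) (xs, y)" by (simp add: in_w_iff leq_iff)
  then have "in_w (f (xs, 0)) (f (xs, y))" using F(4)[OF o0 a] by simp
  then show ?thesis using 1 by (simp add: in_w_iff)
qed

definition Gm :: "nat list \<Rightarrow> nat \<Rightarrow> (nat list \<times> nat \<Rightarrow> nat list \<times> nat) \<Rightarrow> (nat list \<times> nat \<Rightarrow> nat list \<times> nat)" where
  "Gm pp k f = restrict (\<lambda>(xs, y). (fst (f (xs, y)), snd (f (replicate (length pp) 0, y)))) (Obj pp k)"

lemma unit_rmap:
  assumes len: "length pp = length ps" and f: "f \<in> NK_simp ps q pp k"
  shows "unit_Delta ps q pp k (rmap pp k f) = Gm pp k f"
proof (rule extensionalityI)
  show "unit_Delta ps q pp k (rmap pp k f) \<in> extensional (Obj pp k)" by (simp add: unit_Delta_def)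
  show "Gm pp k f \<in> extensional (Obj pp k)" by (simp add: Gm_def)
next
  fix a assume a: "a \<in> Obj pp k"
  obtain xs y where ae: "a = (xs, y)" by (cases a)
  have xs: "length xs = length pp" "\<And>l. l < length pp \<Longrightarrow> xs ! l \<le> pp ! l" "y \<le> k"
    using a ae by (auto simp: Obj_iff)
  have fl: "length (fst (f (xs, y))) = length pp"
    using NK_simpD(2)[OF f a] ae len by (cases "f (xs, y)") (simp add: Obj_iff)
  have L: "map (\<lambda>i. fst (rmap pp k f) ! i ! (xs ! i)) [0..<length pp] = fst (f (xs, y))"
  proof (rule nth_equalityI)
    fix i assume "i < length (map (\<lambda>i. fst (rmap pp k f) ! i ! (xs ! i)) [0..<length pp])"
    then have i: "i < length pp" by simp
    have "xs ! i < Suc (pp ! i)" using xs(2)[OF i] by simp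
    then show "map (\<lambda>i. fst (rmap pp k f) ! i ! (xs ! i)) [0..<length pp] ! i = fst (f (xs, y)) ! i"
      using coord[OF len f a[unfolded ae] i] i by (simp del: upt_Suc add: rmap_def)
  qed (simp add: fl)
  have R: "snd (rmap pp k f) ! y = snd (f (replicate (length pp) 0, y))"
    using xs(3) by (simp del: upt_Suc add: rmap_def nth_append)
  show "unit_Delta ps q pp k (rmap pp k f) a = Gm pp k f a"
    using unit_val[OF a[unfolded ae], where \<alpha>s="fst (rmap pp k f)" and \<beta>="snd (rmap pp k f)"] L R a ae
    by (simp add: Gm_def)
qed


definition Pr :: "nat list \<Rightarrow> nat \<Rightarrow> nat \<Rightarrow> (nat list \<times> nat \<Rightarrow> nat list \<times> nat) \<Rightarrow> (nat list \<times> nat \<Rightarrow> nat list \<times> nat)" where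
  "Pr pp k j f = restrict (\<lambda>(xs, l). (fst (f (xs, if l \<le> j then l else l - 1)),
      if l \<le> j then snd (f (replicate (length pp) 0, l)) else snd (f (xs, l - 1)))) (Obj pp (Suc k))"

lemma Pr_val: "(xs, l) \<in> Obj pp (Suc k) \<Longrightarrow> Pr pp k j f (xs, l) = (fst (f (xs, if l \<le> j then l else l - 1)),
      if l \<le> j then snd (f (replicate (length pp) 0, l)) else snd (f (xs, l - 1)))"
  by (simp add: Pr_def)

lemma Pr_in:
  assumes len: "length pp = length ps" and f: "f \<in> NK_simp ps q pp k" and j: "j \<le> k"
  shows "Pr pp k j f \<in> NK_simp ps q pp (Suc k)"
proof -
  note F = NK_simpD[OF f]
  define c where "c l = (if l \<le> j then l else l - 1)" for l :: nat
  have cO: "(xs, c l) \<in> Obj pp k" if "(xs, l) \<in> Obj pp (Suc k)" for xs l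
    using that j by (auto simp: c_def Obj_iff)
  have zO: "(replicate (length pp) 0, l) \<in> Obj pp k" if "l \<le> j" for l
    using that j by (auto simp: Obj_iff)
  have pO: "(xs, l - 1) \<in> Obj pp k" if "(xs, l) \<in> Obj pp (Suc k)" for xs l
    using that by (auto simp: Obj_iff)
  have cm: "c l \<le> c l'" if "l \<le> l'" for l l' using that unfolding c_def by auto
  have val: "Pr pp k j f (xs, l) = (fst (f (xs, c l)),
      if l \<le> j then snd (f (replicate (length pp) 0, l)) else snd (f (xs, l - 1)))"
    if "(xs, l) \<in> Obj pp (Suc k)" for xs l
    using Pr_val[OF that] by (simp add: c_def)
  have LEQ: "leq (Pr pp k j f (xs, l)) (Pr pp k j f (xs', l'))"
    if a: "(xs, l) \<in> Obj pp (Suc k)" and b: "(xs', l') \<in> Obj pp (Suc k)" and ab: "leq (xs, l) (xs', l')"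
    for xs l xs' l'
  proof -
    have ll: "l \<le> l'" using ab by (simp add: leq_iff)
    have l1: "leq (xs, c l) (xs', c l')" using ab cm[OF ll] by (simp add: leq_def)
    have A: "leq (f (xs, c l)) (f (xs', c l'))" using F(3)[OF cO[OF a] cO[OF b] l1] .
    have zx: "leq (replicate (length pp) 0, m) (xs', m')" if "m \<le> m'" "length xs' = length pp" for m m'
      using that by (simp add: leq_iff)
    have xl: "length xs' = length pp" using b by (simp add: Obj_iff)
    have B: "(if l \<le> j then snd (f (replicate (length pp) 0, l)) else snd (f (xs, l - 1))) \<le>
             (if l' \<le> j then snd (f (replicate (length pp) 0, l')) else snd (f (xs', l' - 1)))"
    proof (cases "l' \<le> j")
      case True
      then have "l \<le> j" using ll by simp
      have "leq (replicate (length pp) 0, l) (replicate (length pp) 0, l')" using ll by (simp add: leq_iff)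
      then have "leq (f (replicate (length pp) 0, l)) (f (replicate (length pp) 0, l'))"
        using F(3)[OF zO[OF \<open>l \<le> j\<close>] zO[OF True]] by simp
      then show ?thesis using True \<open>l \<le> j\<close> by (simp add: leq_def)
    next
      case False
      show ?thesis
      proof (cases "l \<le> j")
        case True
        have "leq (replicate (length pp) 0, l) (xs', l' - 1)" using zx[OF _ xl] True False by simp
        then have "leq (f (replicate (length pp) 0, l)) (f (xs', l' - 1))"
          using F(3)[OF zO[OF True] pO[OF b]] by simp
        then show ?thesis using True False by (simp add: leq_def)
      next
        case False2: False
        have "leq (xs, l - 1) (xs', l' - 1)" using ab by (auto simp: leq_def)
        then have "leq (f (xs, l - 1)) (f (xs', l' - 1))"
          using F(3)[OF pO[OF a] pO[OF b]] by simp
        then show ?thesis using False False2 by (simp add: leq_def)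
      qed
    qed
    show ?thesis unfolding val[OF a] val[OF b] using A B by (simp add: leq_def)
  qed
  show ?thesis
  proof (rule NK_simpI)
    show "Pr pp k j f \<in> extensional (Obj pp (Suc k))" by (simp add: Pr_def)
  next
    fix a assume a: "a \<in> Obj pp (Suc k)"
    obtain xs l where ae: "a = (xs, l)" by (cases a)
    note a' = a[unfolded ae]
    have 1: "f (xs, c l) \<in> Obj ps q" using F(2)[OF cO[OF a']] .
    have 2: "(if l \<le> j then snd (f (replicate (length pp) 0, l)) else snd (f (xs, l - 1))) \<le> q"
    proof (cases "l \<le> j")
      case True
      have "f (replicate (length pp) 0, l) \<in> Obj ps q" using F(2)[OF zO[OF True]] .
      then show ?thesis using True by (cases "f (replicate (length pp) 0, l)") (simp add: Obj_iff)
    next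
      case False
      have "f (xs, l - 1) \<in> Obj ps q" using F(2)[OF pO[OF a']] .
      then show ?thesis using False by (cases "f (xs, l - 1)") (simp add: Obj_iff)
    qed
    show "Pr pp k j f a \<in> Obj ps q"
      unfolding ae val[OF a'] using 1 2 by (cases "f (xs, c l)") (simp add: Obj_iff)
  next
    fix a b assume a: "a \<in> Obj pp (Suc k)" and b: "b \<in> Obj pp (Suc k)" and ab: "leq a b"
    obtain xs l where ae: "a = (xs, l)" by (cases a)
    obtain xs' l' where be: "b = (xs', l')" by (cases b)
    show "leq (Pr pp k j f a) (Pr pp k j f b)" using LEQ a b ab unfolding ae be by blast
  next
    fix a b assume a: "a \<in> Obj pp (Suc k)" and b: "b \<in> Obj pp (Suc k)" and ab: "in_w a b"
    obtain xs l where ae: "a = (xs, l)" by (cases a)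
    obtain xs' l' where be: "b = (xs', l')" by (cases b)
    note a' = a[unfolded ae] and b' = b[unfolded be]
    have "in_w (xs, l) (xs', l')" using ab ae be by simp
    then have ab': "leq (xs, l) (xs', l')" "xs = xs'" unfolding in_w_iff by auto
    have "in_w (xs, c l) (xs', c l')" using ab' cm by (simp add: in_w_iff leq_iff)
    then have "in_w (f (xs, c l)) (f (xs', c l'))" using F(4)[OF cO[OF a'] cO[OF b']] by simp
    then have "fst (Pr pp k j f (xs, l)) = fst (Pr pp k j f (xs', l'))"
      unfolding val[OF a'] val[OF b'] by (simp add: in_w_iff)
    then show "in_w (Pr pp k j f a) (Pr pp k j f b)"
      using LEQ[OF a' b' ab'(1)] ae be by (simp add: in_w_iff)
  next
    fix i a b assume i: "i < length ps" and a: "a \<in> Obj pp (Suc k)" and b: "b \<in> Obj pp (Suc k)" and ab: "in_v i a b"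
    obtain xs l where ae: "a = (xs, l)" by (cases a)
    obtain xs' l' where be: "b = (xs', l')" by (cases b)
    note a' = a[unfolded ae] and b' = b[unfolded be]
    have ab': "leq (xs, l) (xs', l')" "\<forall>m<length xs. m \<noteq> i \<longrightarrow> xs ! m = xs' ! m"
      using ab ae be by (simp_all add: in_v_def)
    have "in_v i (xs, c l) (xs', c l')" using ab' cm unfolding in_v_def by (simp add: leq_iff)
    then have "in_v i (f (xs, c l)) (f (xs', c l'))" using F(5)[OF i cO[OF a'] cO[OF b']] by simp
    then have "\<forall>m<length (fst (Pr pp k j f (xs, l))). m \<noteq> i \<longrightarrow> fst (Pr pp k j f (xs, l)) ! m = fst (Pr pp k j f (xs', l')) ! m"
      unfolding val[OF a'] val[OF b'] by (simp add: in_v_def)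
    then show "in_v i (Pr pp k j f a) (Pr pp k j f b)"
      using LEQ[OF a' b' ab'(1)] ae be by (simp add: in_v_def)
  qed
qed


definition Lc :: "(nat \<Rightarrow> real) \<Rightarrow> nat \<Rightarrow> real" where
  "Lc t j = sum t {..<j}"

definition wt :: "nat \<Rightarrow> (nat \<Rightarrow> real) \<Rightarrow> real \<Rightarrow> nat \<Rightarrow> real" where
  "wt j t \<sigma> l = (if l < j then t l else if l = j then \<sigma> - Lc t j
      else if l = Suc j then Lc t (Suc j) - \<sigma> else t (l - 1))"

definition ins0 :: "nat \<Rightarrow> (nat \<Rightarrow> real) \<Rightarrow> nat \<Rightarrow> real" where
  "ins0 p t l = (if l < p then t l else if l = p then 0 else t (l - 1))"

definition skp :: "nat \<Rightarrow> nat \<Rightarrow> nat list" where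
  "skp p k = map (\<lambda>l. if l < p then l else Suc l) [0..<Suc k]"

definition dg :: "nat \<Rightarrow> nat \<Rightarrow> nat list" where
  "dg j k = map (\<lambda>l. if l \<le> j then l else l - 1) [0..<Suc (Suc k)]"

definition thp :: "nat list \<Rightarrow> nat \<Rightarrow> nat \<Rightarrow> nat list" where
  "thp \<theta> j k = map (\<lambda>l. if l \<le> j then \<theta> ! l else Suc (\<theta> ! (l - 1))) [0..<Suc (Suc k)]"

lemma ss_D:
  assumes "t \<in> standard_simplex k"
  shows "\<And>i. 0 \<le> t i" "\<And>i. t i \<le> 1" "\<And>i. k < i \<Longrightarrow> t i = 0" "sum t {..k} = 1"
  using assms by (auto simp: standard_simplex_def)

lemma ss_I:
  assumes "\<And>i. 0 \<le> t i" "\<And>i. t i \<le> 1" "\<And>i. k < i \<Longrightarrow> t i = 0" "sum t {..k} = 1"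
  shows "t \<in> standard_simplex k"
  using assms by (auto simp: standard_simplex_def)

lemma sm_map: "simplex_map (map F [0..<n]) t p = sum t {i. i < n \<and> F i = p}"
  unfolding simplex_map_def by (rule sum.cong) auto

lemma Lc_Suc: "Lc t (Suc j) = Lc t j + t j"
  by (simp add: Lc_def)

lemma Lc_0: "Lc t 0 = 0" by (simp add: Lc_def)

lemma Lc_total: "t \<in> standard_simplex k \<Longrightarrow> Lc t (Suc k) = 1"
  using ss_D(4) by (simp add: Lc_def lessThan_Suc_atMost)

lemma Lc_mono: "t \<in> standard_simplex k \<Longrightarrow> i \<le> j \<Longrightarrow> Lc t i \<le> Lc t j"
  unfolding Lc_def by (rule sum_mono2) (auto intro: ss_D(1))

lemma Lc_big: "t \<in> standard_simplex k \<Longrightarrow> k < j \<Longrightarrow> Lc t j = 1"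
proof -
  assume t: "t \<in> standard_simplex k" and kj: "k < j"
  have "{..<j} = {..k} \<union> {Suc k..<j}" using kj by auto
  moreover have "sum t ({..k} \<union> {Suc k..<j}) = sum t {..k} + sum t {Suc k..<j}"
    by (rule sum.union_disjoint) auto
  ultimately have "Lc t j = sum t {..k} + sum t {Suc k..<j}"
    unfolding Lc_def by simp
  also have "sum t {Suc k..<j} = 0" using ss_D(3)[OF t] by (intro sum.neutral) auto
  finally show ?thesis using ss_D(4)[OF t] by simp
qed

lemma skp_mono: "p \<le> Suc k \<Longrightarrow> skp p k \<in> mono_list k (Suc k)"
  unfolding skp_def by (rule mono_list_map) auto

lemma skp_nth: "l \<le> k \<Longrightarrow> skp p k ! l = (if l < p then l else Suc l)"
  unfolding skp_def by (simp del: upt_Suc add: less_Suc_eq_le)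

lemma sm_skp:
  assumes t: "\<And>i. k < i \<Longrightarrow> t i = 0" and p: "p \<le> Suc k"
  shows "simplex_map (skp p k) t = ins0 p t"
proof
  fix l
  have "simplex_map (skp p k) t l = sum t {i. i < Suc k \<and> (if i < p then i else Suc i) = l}"
    unfolding skp_def sm_map ..
  also have "\<dots> = ins0 p t l"
  proof (cases "l < p")
    case True
    then have "{i. i < Suc k \<and> (if i < p then i else Suc i) = l} = {l}" using p by auto
    then show ?thesis using True by (simp add: ins0_def)
  next
    case False
    show ?thesis
    proof (cases "l = p")
      case True
      then have "{i. i < Suc k \<and> (if i < p then i else Suc i) = l} = {}" by auto
      then show ?thesis using True by (simp add: ins0_def)
    next
      case False2: False
      show ?thesis
      proof (cases "l - 1 \<le> k")
        case True
        then have "{i. i < Suc k \<and> (if i < p then i else Suc i) = l} = {l - 1}" using False False2 by auto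
        then show ?thesis using False False2 by (simp add: ins0_def)
      next
        case False3: False
        have E: "{i. i < Suc k \<and> (if i < p then i else Suc i) = l} = {}" using False False2 False3
          by (auto split: if_split_asm)
        show ?thesis unfolding E using False False2 False3 t[of "l - 1"] by (simp add: ins0_def)
      qed
    qed
  qed
  finally show "simplex_map (skp p k) t l = ins0 p t l" .
qed

lemma wt_ins_a: "wt 0 t 0 = ins0 0 t"
  by (rule ext) (simp add: wt_def ins0_def Lc_def)

lemma wt_ins_b:
  assumes "\<sigma> = Lc t (Suc i)"
  shows "wt i t \<sigma> = ins0 (Suc i) t" "wt (Suc i) t \<sigma> = ins0 (Suc i) t"
  using assms by (auto simp: wt_def ins0_def Lc_Suc less_Suc_eq intro!: ext)

lemma wt_ss:
  assumes t: "t \<in> standard_simplex k" and j: "j \<le> k" and s1: "Lc t j \<le> \<sigma>" and s2: "\<sigma> \<le> Lc t (Suc j)"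
  shows "wt j t \<sigma> \<in> standard_simplex (Suc k)"
proof (rule ss_I)
  have Lj: "0 \<le> Lc t j" unfolding Lc_def by (rule sum_nonneg) (use ss_D(1)[OF t] in auto)
  have L1: "Lc t (Suc j) \<le> 1" using Lc_mono[OF t, of "Suc j" "Suc k"] j Lc_total[OF t] by simp
  fix i
  show "0 \<le> wt j t \<sigma> i" using ss_D(1)[OF t] s1 s2 by (simp add: wt_def)
  show "wt j t \<sigma> i \<le> 1" using ss_D(2)[OF t] s1 s2 Lj L1 by (simp add: wt_def)
next
  fix i assume "Suc k < i"
  then show "wt j t \<sigma> i = 0" using j ss_D(3)[OF t, of "i - 1"] by (simp add: wt_def)
next
  have U: "{..Suc k} = ({..<j} \<union> {j, Suc j}) \<union> Suc ` {Suc j..k}" using j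
    by (auto simp: image_iff)
  have "sum (wt j t \<sigma>) {..Suc k} = sum (wt j t \<sigma>) ({..<j} \<union> {j, Suc j}) + sum (wt j t \<sigma>) (Suc ` {Suc j..k})"
    unfolding U by (rule sum.union_disjoint) auto
  also have "sum (wt j t \<sigma>) ({..<j} \<union> {j, Suc j}) = sum (wt j t \<sigma>) {..<j} + sum (wt j t \<sigma>) {j, Suc j}"
    by (rule sum.union_disjoint) auto
  also have "sum (wt j t \<sigma>) {..<j} = Lc t j" unfolding Lc_def by (rule sum.cong) (auto simp: wt_def)
  also have "sum (wt j t \<sigma>) {j, Suc j} = Lc t (Suc j) - Lc t j" by (simp add: wt_def)
  also have "sum (wt j t \<sigma>) (Suc ` {Suc j..k}) = sum t {Suc j..k}"
  proof -
    have "sum (wt j t \<sigma>) (Suc ` {Suc j..k}) = sum (wt j t \<sigma> \<circ> Suc) {Suc j..k}"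
      by (rule sum.reindex) simp
    also have "\<dots> = sum t {Suc j..k}" by (rule sum.cong) (auto simp: wt_def)
    finally show ?thesis .
  qed
  also have "Lc t j + (Lc t (Suc j) - Lc t j) + sum t {Suc j..k} = sum t {..k}"
  proof -
    have "{..k} = {..<Suc j} \<union> {Suc j..k}" using j by auto
    moreover have "sum t ({..<Suc j} \<union> {Suc j..k}) = sum t {..<Suc j} + sum t {Suc j..k}"
      by (rule sum.union_disjoint) auto
    ultimately show ?thesis by (simp add: Lc_def)
  qed
  finally show "sum (wt j t \<sigma>) {..Suc k} = 1" using ss_D(4)[OF t] by simp
qed

lemma init_mono: "j \<le> m \<Longrightarrow> [0..<Suc j] \<in> mono_list j m"
  using mono_list_map[of j id m] by (simp add: map_idI)

lemma sm_init:
  assumes "\<And>i. j < i \<Longrightarrow> t i = 0"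
  shows "simplex_map [0..<Suc j] t = t"
proof
  fix l
  have "simplex_map [0..<Suc j] t l = sum t {i. i < Suc j \<and> i = l}"
    using sm_map[of id "Suc j" t l] by (simp add: map_idI)
  also have "\<dots> = t l"
    using assms[of l] by (cases "l < Suc j") (auto simp: Collect_conj_eq)
  finally show "simplex_map [0..<Suc j] t l = t l" .
qed

lemma ss_trunc:
  assumes t: "t \<in> standard_simplex m" and z: "\<And>i. j < i \<Longrightarrow> t i = 0" and j: "j \<le> m"
  shows "t \<in> standard_simplex j"
proof (rule ss_I)
  have "{..m} = {..j} \<union> {Suc j..m}" using j by auto
  moreover have "sum t ({..j} \<union> {Suc j..m}) = sum t {..j} + sum t {Suc j..m}"
    by (rule sum.union_disjoint) auto
  ultimately have "sum t {..m} = sum t {..j} + sum t {Suc j..m}" by simp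
  moreover have "sum t {Suc j..m} = 0" using z by (intro sum.neutral) auto
  ultimately show "sum t {..j} = 1" using ss_D(4)[OF t] by simp
qed (use ss_D[OF t] z in auto)


lemma dg_mono: "j \<le> k \<Longrightarrow> dg j k \<in> mono_list (Suc k) k"
  unfolding dg_def by (rule mono_list_map) auto

lemma dg_nth: "l \<le> Suc k \<Longrightarrow> dg j k ! l = (if l \<le> j then l else l - 1)"
  unfolding dg_def by (simp del: upt_Suc add: less_Suc_eq_le)

lemma sm_dg:
  assumes t: "t \<in> standard_simplex k" and j: "j \<le> k"
  shows "simplex_map (dg j k) (wt j t \<sigma>) = t"
proof
  fix p
  have "simplex_map (dg j k) (wt j t \<sigma>) p = sum (wt j t \<sigma>) {l. l < Suc (Suc k) \<and> (if l \<le> j then l else l - 1) = p}"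
    unfolding dg_def sm_map ..
  also have "\<dots> = t p"
  proof (cases "p < j")
    case True
    then have "{l. l < Suc (Suc k) \<and> (if l \<le> j then l else l - 1) = p} = {p}" using j by auto
    then show ?thesis using True by (simp add: wt_def)
  next
    case False
    show ?thesis
    proof (cases "p = j")
      case True
      then have "{l. l < Suc (Suc k) \<and> (if l \<le> j then l else l - 1) = p} = {j, Suc j}" using j by auto
      then show ?thesis using True by (simp add: wt_def Lc_Suc)
    next
      case False2: False
      show ?thesis
      proof (cases "p \<le> k")
        case True
        then have "{l. l < Suc (Suc k) \<and> (if l \<le> j then l else l - 1) = p} = {Suc p}" using False False2 by auto
        then show ?thesis using False False2 by (simp add: wt_def)
      next
        case False3: False
        have E: "{l. l < Suc (Suc k) \<and> (if l \<le> j then l else l - 1) = p} = {}" using False False2 False3 j by auto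
        show ?thesis unfolding E using ss_D(3)[OF t, of p] False3 by simp
      qed
    qed
  qed
  finally show "simplex_map (dg j k) (wt j t \<sigma>) p = t p" .
qed

lemma wt_full:
  assumes t: "t \<in> standard_simplex k" and j: "j \<le> k" and s: "1 \<le> Lc t (Suc j)"
  shows "\<And>i. j < i \<Longrightarrow> t i = 0" "wt j t 1 = t"
proof -
  have L1: "Lc t (Suc j) = 1" using Lc_mono[OF t, of "Suc j" "Suc k"] j Lc_total[OF t] s by simp
  have "{..<Suc k} = {..<Suc j} \<union> {Suc j..k}" using j by auto
  moreover have "sum t ({..<Suc j} \<union> {Suc j..k}) = sum t {..<Suc j} + sum t {Suc j..k}"
    by (rule sum.union_disjoint) auto
  ultimately have "Lc t (Suc k) = Lc t (Suc j) + sum t {Suc j..k}" by (simp add: Lc_def)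
  then have S0: "sum t {Suc j..k} = 0" using L1 Lc_total[OF t] by simp
  have Z: "t i = 0" if "j < i" for i
  proof (cases "i \<le> k")
    case True
    then show ?thesis using S0 sum_nonneg_eq_0_iff[of "{Suc j..k}" t] ss_D(1)[OF t] that by auto
  next
    case False then show ?thesis using ss_D(3)[OF t] by simp
  qed
  show "\<And>i. j < i \<Longrightarrow> t i = 0" by (rule Z)
  show "wt j t 1 = t"
  proof
    fix l
    show "wt j t 1 l = t l"
      using Z[of l] Z[of "l - 1"] L1 by (auto simp: wt_def Lc_Suc)
  qed
qed

lemma thp_nth: "l \<le> Suc k \<Longrightarrow> thp \<theta> j k ! l = (if l \<le> j then \<theta> ! l else Suc (\<theta> ! (l - 1)))"
  unfolding thp_def by (simp del: upt_Suc add: less_Suc_eq_le)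

lemma thp_mono:
  assumes th: "\<theta> \<in> mono_list k m" and j: "j \<le> k"
  shows "thp \<theta> j k \<in> mono_list (Suc k) (Suc m)"
  unfolding thp_def
proof (rule mono_list_map)
  note M = mono_list_D[OF th]
  fix i assume "i \<le> Suc k"
  then show "(if i \<le> j then \<theta> ! i else Suc (\<theta> ! (i - 1))) \<le> Suc m"
    using M(2)[of i] M(2)[of "i - 1"] j by auto
next
  note M = mono_list_D[OF th]
  fix i i' assume ii: "i \<le> i'" "i' \<le> Suc k"
  show "(if i \<le> j then \<theta> ! i else Suc (\<theta> ! (i - 1))) \<le> (if i' \<le> j then \<theta> ! i' else Suc (\<theta> ! (i' - 1)))"
  proof (cases "i' \<le> j")
    case True then show ?thesis using ii M(3)[of i i'] j by auto
  next
    case False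
    show ?thesis
    proof (cases "i \<le> j")
      case True
      then have "\<theta> ! i \<le> \<theta> ! (i' - 1)" using M(3)[of i "i' - 1"] ii False by auto
      then show ?thesis using True False by simp
    next
      case False2: False
      then show ?thesis using False M(3)[of "i - 1" "i' - 1"] ii by auto
    qed
  qed
qed

lemma Lc_sm:
  assumes th: "\<theta> \<in> mono_list k m"
  shows "Lc (simplex_map \<theta> t) P = sum t {i. i < Suc k \<and> \<theta> ! i < P}"
proof -
  have L: "length \<theta> = Suc k" using mono_list_D(1)[OF th] .
  have "Lc (simplex_map \<theta> t) P = (\<Sum>p<P. sum t {i. i \<in> {i. i < Suc k \<and> \<theta> ! i < P} \<and> \<theta> ! i = p})"
    unfolding Lc_def simplex_map_def L
  proof (rule sum.cong)
    fix p assume "p \<in> {..<P}"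
    then have "{i. i < Suc k \<and> \<theta> ! i = p} = {i. i \<in> {i. i < Suc k \<and> \<theta> ! i < P} \<and> \<theta> ! i = p}" by auto
    then show "sum t {i. i < Suc k \<and> \<theta> ! i = p} = sum t {i. i \<in> {i. i < Suc k \<and> \<theta> ! i < P} \<and> \<theta> ! i = p}"
      by simp
  qed simp
  also have "\<dots> = sum t {i. i < Suc k \<and> \<theta> ! i < P}"
    by (rule sum.group) auto
  finally show ?thesis .
qed


lemma compat_weights:
  assumes th: "\<theta> \<in> mono_list k m" and t: "t \<in> standard_simplex k" and j: "j \<le> k"
    and s1: "Lc t j \<le> \<sigma>" and s2: "\<sigma> \<le> Lc t (Suc j)"
  shows "Lc (simplex_map \<theta> t) (\<theta> ! j) \<le> \<sigma>" "\<sigma> \<le> Lc (simplex_map \<theta> t) (Suc (\<theta> ! j))"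
    "simplex_map (thp \<theta> j k) (wt j t \<sigma>) = wt (\<theta> ! j) (simplex_map \<theta> t) \<sigma>"
proof -
  define J where "J = \<theta> ! j"
  define u where "u = simplex_map \<theta> t"
  note M = mono_list_D[OF th]
  have lt_imp: "i < j" if "i \<le> k" "\<theta> ! i < J" for i
  proof (rule ccontr)
    assume "\<not> i < j" then have "\<theta> ! j \<le> \<theta> ! i" using M(3)[of j i] that by simp
    then show False using that by (simp add: J_def)
  qed
  have le_imp: "\<theta> ! i \<le> J" if "i \<le> j" for i using M(3)[of i j] that j by (simp add: J_def)
  have ge_imp: "J \<le> \<theta> ! i" if "j \<le> i" "i \<le> k" for i using M(3)[of j i] that by (simp add: J_def)
  have tn: "0 \<le> t i" for i using ss_D(1)[OF t] .
  define A where "A = {i. i < j \<and> \<theta> ! i < J}"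
  define E where "E = {i. i < j \<and> \<theta> ! i = J}"
  define B where "B = {i. j < i \<and> i < Suc k \<and> \<theta> ! i = J}"
  have fin: "finite A" "finite E" "finite B" by (auto simp: A_def E_def B_def)
  have Lj: "Lc t j = sum t A + sum t E"
  proof -
    have "{..<j} = A \<union> E"
    proof (rule Set.set_eqI)
      fix i show "i \<in> {..<j} \<longleftrightarrow> i \<in> A \<union> E" using le_imp[of i] by (auto simp: A_def E_def)
    qed
    moreover have "A \<inter> E = {}" by (auto simp: A_def E_def)
    ultimately show ?thesis unfolding Lc_def using fin by (simp add: sum.union_disjoint)
  qed
  have LuJ: "Lc u J = sum t A"
  proof -
    have "{i. i < Suc k \<and> \<theta> ! i < J} = A" using lt_imp j by (auto simp: A_def)
    then show ?thesis using Lc_sm[OF th, of t J] by (simp add: u_def)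
  qed
  have LuSJ: "Lc u (Suc J) = Lc t (Suc j) + sum t B"
  proof -
    have "{i. i < Suc k \<and> \<theta> ! i < Suc J} = {..<Suc j} \<union> B"
    proof (rule Set.set_eqI, rule iffI)
      fix i assume "i \<in> {i. i < Suc k \<and> \<theta> ! i < Suc J}"
      then have "i < Suc k" "\<theta> ! i \<le> J" by auto
      then show "i \<in> {..<Suc j} \<union> B" using ge_imp[of i] by (cases "i \<le> j") (auto simp: B_def)
    next
      fix i assume "i \<in> {..<Suc j} \<union> B"
      then show "i \<in> {i. i < Suc k \<and> \<theta> ! i < Suc J}" using le_imp[of i] j by (auto simp: B_def)
    qed
    moreover have "{..<Suc j} \<inter> B = {}" by (auto simp: B_def)
    ultimately show ?thesis using Lc_sm[OF th, of t "Suc J"] fin unfolding u_def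
      by (simp add: sum.union_disjoint Lc_def)
  qed
  have sA: "0 \<le> sum t E" "0 \<le> sum t B" using tn by (auto intro: sum_nonneg)
  show "Lc (simplex_map \<theta> t) (\<theta> ! j) \<le> \<sigma>"
    using LuJ Lj sA s1 by (simp add: u_def J_def)
  show "\<sigma> \<le> Lc (simplex_map \<theta> t) (Suc (\<theta> ! j))"
    using LuSJ sA s2 by (simp add: u_def J_def)
  have up: "u p = sum t {i. i < Suc k \<and> \<theta> ! i = p}" for p
    using M(1) by (simp add: u_def simplex_map_def)
  show "simplex_map (thp \<theta> j k) (wt j t \<sigma>) = wt (\<theta> ! j) (simplex_map \<theta> t) \<sigma>"
    unfolding J_def[symmetric] u_def[symmetric]
  proof
    fix p
    define S where "S = {l. l < Suc (Suc k) \<and> (if l \<le> j then \<theta> ! l else Suc (\<theta> ! (l - 1))) = p}"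
    have LHS: "simplex_map (thp \<theta> j k) (wt j t \<sigma>) p = sum (wt j t \<sigma>) S"
      unfolding thp_def sm_map S_def ..
    have "sum (wt j t \<sigma>) S = wt J u \<sigma> p"
    proof (cases "p < J")
      case True
      have "S = {l. l < j \<and> \<theta> ! l = p}"
      proof (rule Set.set_eqI, rule iffI)
        fix l assume l: "l \<in> S"
        show "l \<in> {l. l < j \<and> \<theta> ! l = p}"
        proof (cases "l \<le> j")
          case True2: True
          then have "\<theta> ! l = p" using l by (simp add: S_def)
          then show ?thesis using True True2 J_def by (cases "l = j") auto
        next
          case False
          then have P: "Suc (\<theta> ! (l - 1)) = p" "l < Suc (Suc k)" using l by (auto simp: S_def)
          have "J \<le> \<theta> ! (l - 1)" using False P(2) by (intro ge_imp) arith+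
          then show ?thesis using P True by simp
        qed
      next
        fix l assume "l \<in> {l. l < j \<and> \<theta> ! l = p}"
        then show "l \<in> S" using j by (auto simp: S_def)
      qed
      moreover have "{i. i < Suc k \<and> \<theta> ! i = p} = {l. l < j \<and> \<theta> ! l = p}"
        using lt_imp True j by auto
      ultimately show ?thesis using True up[of p] by (auto simp: wt_def intro!: sum.cong)
    next
      case False
      show ?thesis
      proof (cases "p = J")
        case True
        have "S = insert j E"
        proof (rule Set.set_eqI, rule iffI)
          fix l assume l: "l \<in> S"
          show "l \<in> insert j E"
          proof (cases "l \<le> j")
            case True2: True
            then show ?thesis using l True by (auto simp: S_def E_def)
          next
            case False2: False
            then have P: "Suc (\<theta> ! (l - 1)) = p" "l < Suc (Suc k)" using l by (auto simp: S_def)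
            have "J \<le> \<theta> ! (l - 1)" using False2 P(2) by (intro ge_imp) arith+
            then show ?thesis using P True by simp
          qed
        next
          fix l assume "l \<in> insert j E"
          then show "l \<in> S" using j True J_def by (auto simp: S_def E_def)
        qed
        moreover have "sum (wt j t \<sigma>) E = sum t E" by (rule sum.cong) (auto simp: E_def wt_def)
        moreover have "j \<notin> E" by (simp add: E_def)
        ultimately have "sum (wt j t \<sigma>) S = (\<sigma> - Lc t j) + sum t E" using fin by (simp add: wt_def)
        then show ?thesis using True Lj LuJ by (simp add: wt_def)
      next
        case False2: False
        show ?thesis
        proof (cases "p = Suc J")
          case True
          have "S = Suc ` insert j B"
          proof (rule Set.set_eqI, rule iffI)
            fix l assume l: "l \<in> S"
            show "l \<in> Suc ` insert j B"
            proof (cases "l \<le> j")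
              case True2: True
              then show ?thesis using l True le_imp[of l] by (auto simp: S_def)
            next
              case False3: False
              then have "Suc (\<theta> ! (l - 1)) = p" "l < Suc (Suc k)" using l by (auto simp: S_def)
              then have "l - 1 \<in> insert j B" using False3 True by (auto simp: B_def)
              moreover have "l = Suc (l - 1)" using False3 by simp
              ultimately show ?thesis by blast
            qed
          next
            fix l assume "l \<in> Suc ` insert j B"
            then show "l \<in> S" using j True J_def by (auto simp: S_def B_def)
          qed
          moreover have "sum (wt j t \<sigma>) (Suc ` insert j B) = sum (wt j t \<sigma> \<circ> Suc) (insert j B)"
            by (rule sum.reindex) (auto simp: inj_on_def)
          moreover have "sum (wt j t \<sigma> \<circ> Suc) B = sum t B" by (rule sum.cong) (auto simp: B_def wt_def)
          moreover have "j \<notin> B" by (simp add: B_def)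
          ultimately have "sum (wt j t \<sigma>) S = (Lc t (Suc j) - \<sigma>) + sum t B" using fin by (simp add: wt_def)
          then show ?thesis using True LuSJ by (simp add: wt_def)
        next
          case False3: False
          define C where "C = {i. j < i \<and> i < Suc k \<and> \<theta> ! i = p - 1}"
          have "S = Suc ` C"
          proof (rule Set.set_eqI, rule iffI)
            fix l assume l: "l \<in> S"
            show "l \<in> Suc ` C"
            proof (cases "l \<le> j")
              case True2: True
              then show ?thesis using l False False2 le_imp[of l] by (auto simp: S_def)
            next
              case False4: False
              then have P: "Suc (\<theta> ! (l - 1)) = p" "l < Suc (Suc k)" using l by (auto simp: S_def)
              have ne: "l - 1 \<noteq> j" using P False3 J_def by auto
              then have "j < l - 1" using False4 by arith
              then have "l - 1 \<in> C" using P by (auto simp: C_def)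
              moreover have "l = Suc (l - 1)" using False4 by simp
              ultimately show ?thesis by blast
            qed
          next
            fix l assume "l \<in> Suc ` C"
            then show "l \<in> S" using False False2 by (auto simp: S_def C_def)
          qed
          moreover have "sum (wt j t \<sigma>) (Suc ` C) = sum (wt j t \<sigma> \<circ> Suc) C"
            by (rule sum.reindex) simp
          moreover have "sum (wt j t \<sigma> \<circ> Suc) C = sum t C" by (rule sum.cong) (auto simp: C_def wt_def)
          moreover have "{i. i < Suc k \<and> \<theta> ! i = p - 1} = C"
          proof (rule Set.set_eqI, rule iffI)
            fix i assume i: "i \<in> {i. i < Suc k \<and> \<theta> ! i = p - 1}"
            have pJ: "J < p - 1" using False False2 False3 by arith
            have "\<not> i \<le> j"
            proof
              assume "i \<le> j" then have "\<theta> ! i \<le> J" by (rule le_imp)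
              then show False using i pJ by simp
            qed
            then show "i \<in> C" using i by (simp add: C_def)
          qed (simp add: C_def)
          ultimately show ?thesis using False False2 False3 up[of "p - 1"] by (simp add: wt_def)
        qed
      qed
    qed
    then show "simplex_map (thp \<theta> j k) (wt j t \<sigma>) p = wt J u \<sigma> p" using LHS by simp
  qed
qed


lemma Obj_mono: "(xs, l) \<in> Obj pp k \<Longrightarrow> l' \<le> k' \<Longrightarrow> (xs, l') \<in> Obj pp k'"
  by (simp add: Obj_iff)

lemma Obj_le: "(xs, l) \<in> Obj pp k \<Longrightarrow> l \<le> k"
  by (simp add: Obj_iff)

lemma NK_ext: "f \<in> NK_simp ps q pp k \<Longrightarrow> f \<in> extensional (Obj pp k)"
  by (rule NK_simpD(1))

lemma Pr_ext: "Pr pp k j f \<in> extensional (Obj pp (Suc k))"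
  by (simp add: Pr_def)

lemma Gm_val: "(xs, l) \<in> Obj pp k \<Longrightarrow> Gm pp k f (xs, l) = (fst (f (xs, l)), snd (f (replicate (length pp) 0, l)))"
  by (simp add: Gm_def)

lemma n1:
  assumes x: "x \<in> NK_simp ps q pp k"
  shows "NK_act pp (skp 0 k) (Pr pp k 0 x) = x"
proof -
  have sk: "skp 0 k \<in> mono_list k (Suc k)" using skp_mono by simp
  show ?thesis
  proof (rule extensionalityI[OF NK_act_ext[OF sk] NK_ext[OF x]])
  fix a assume a: "a \<in> Obj pp k"
  obtain xs l where ae: "a = (xs, l)" by (cases a)
  have l: "l \<le> k" using Obj_le a ae by simp
  have o: "(xs, Suc l) \<in> Obj pp (Suc k)" using Obj_mono[of xs l pp k "Suc l" "Suc k"] a ae l by simp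
  show "NK_act pp (skp 0 k) (Pr pp k 0 x) a = x a"
    unfolding ae NK_act_val[OF sk a[unfolded ae]]
    using skp_nth[OF l, of 0] Pr_val[OF o, of 0 x] by simp
  qed
qed

lemma n2:
  assumes i: "i < k"
  shows "NK_act pp (skp (Suc i) k) (Pr pp k i x) = NK_act pp (skp (Suc i) k) (Pr pp k (Suc i) x)"
proof -
  have sk: "skp (Suc i) k \<in> mono_list k (Suc k)" using skp_mono i by simp
  show ?thesis
  proof (rule extensionalityI[OF NK_act_ext[OF sk] NK_act_ext[OF sk]])
    fix a assume a: "a \<in> Obj pp k"
    obtain xs l where ae: "a = (xs, l)" by (cases a)
    have l: "l \<le> k" using Obj_le a ae by simp
    define e where "e = (if l < Suc i then l else Suc l)"
    have o: "(xs, e) \<in> Obj pp (Suc k)" using Obj_mono[of xs l pp k e "Suc k"] a ae l by (simp add: e_def)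
    have sn: "skp (Suc i) k ! l = e" using skp_nth[OF l] by (simp add: e_def)
    show "NK_act pp (skp (Suc i) k) (Pr pp k i x) a = NK_act pp (skp (Suc i) k) (Pr pp k (Suc i) x) a"
      unfolding ae NK_act_val[OF sk a[unfolded ae]] sn Pr_val[OF o]
      by (simp add: e_def)
  qed
qed

lemma n3:
  assumes j: "j \<le> k"
  shows "NK_act pp [0..<Suc j] (Pr pp k j x) = NK_act pp [0..<Suc j] (Gm pp k x)"
proof -
  have sk: "[0..<Suc j] \<in> mono_list j (Suc k)" using init_mono j by simp
  have sk2: "[0..<Suc j] \<in> mono_list j k" using init_mono j by simp
  show ?thesis
  proof (rule extensionalityI[OF NK_act_ext[OF sk] NK_act_ext[OF sk2]])
    fix a assume a: "a \<in> Obj pp j"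
    obtain xs l where ae: "a = (xs, l)" by (cases a)
    have l: "l \<le> j" using Obj_le a ae by simp
    have o1: "(xs, l) \<in> Obj pp (Suc k)" using Obj_mono[of xs l pp j l "Suc k"] a ae l j by simp
    have o2: "(xs, l) \<in> Obj pp k" using Obj_mono[of xs l pp j l k] a ae l j by simp
    have nn: "[0..<Suc j] ! l = l" using l by (simp del: upt_Suc)
    show "NK_act pp [0..<Suc j] (Pr pp k j x) a = NK_act pp [0..<Suc j] (Gm pp k x) a"
      unfolding ae NK_act_val[OF sk a[unfolded ae]] NK_act_val[OF sk2 a[unfolded ae]] nn
        Pr_val[OF o1] Gm_val[OF o2] using l by simp
  qed
qed

lemma n4:
  assumes j: "j \<le> k" and y: "y \<in> NK_simp ps q pp k" and G: "Gm pp k y = y"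
  shows "Pr pp k j y = NK_act pp (dg j k) y"
proof -
  have sk: "dg j k \<in> mono_list (Suc k) k" using dg_mono j by simp
  show ?thesis
  proof (rule extensionalityI[OF Pr_ext NK_act_ext[OF sk]])
    fix a assume a: "a \<in> Obj pp (Suc k)"
    obtain xs l where ae: "a = (xs, l)" by (cases a)
    have l: "l \<le> Suc k" using Obj_le a ae by simp
    show "Pr pp k j y a = NK_act pp (dg j k) y a"
    proof (cases "l \<le> j")
      case True
      have o: "(xs, l) \<in> Obj pp k" using Obj_mono[of xs l pp "Suc k" l k] a ae True j by simp
      have "Gm pp k y (xs, l) = y (xs, l)" using G by simp
      then have "snd (y (replicate (length pp) 0, l)) = snd (y (xs, l))"
        unfolding Gm_val[OF o] by (metis snd_conv)
      then show ?thesis unfolding ae NK_act_val[OF sk a[unfolded ae]] Pr_val[OF a[unfolded ae]]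
        using dg_nth[OF l, of j] True by simp
    next
      case False
      then show ?thesis unfolding ae NK_act_val[OF sk a[unfolded ae]] Pr_val[OF a[unfolded ae]]
        using dg_nth[OF l, of j] by simp
    qed
  qed
qed

lemma n5:
  assumes th: "\<theta> \<in> mono_list k m" and j: "j \<le> k"
  shows "Pr pp k j (NK_act pp \<theta> x) = NK_act pp (thp \<theta> j k) (Pr pp m (\<theta> ! j) x)"
proof -
  note M = mono_list_D[OF th]
  have sk: "thp \<theta> j k \<in> mono_list (Suc k) (Suc m)" using thp_mono th j by simp
  show ?thesis
  proof (rule extensionalityI[OF Pr_ext NK_act_ext[OF sk]])
    fix a assume a: "a \<in> Obj pp (Suc k)"
    obtain xs l where ae: "a = (xs, l)" by (cases a)
    have l: "l \<le> Suc k" using Obj_le a ae by simp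
    have tl: "thp \<theta> j k ! l \<le> Suc m" using mono_list_D(2)[OF sk l] .
    have o2: "(xs, thp \<theta> j k ! l) \<in> Obj pp (Suc m)" using Obj_mono[OF a[unfolded ae] tl] .
    show "Pr pp k j (NK_act pp \<theta> x) a = NK_act pp (thp \<theta> j k) (Pr pp m (\<theta> ! j) x) a"
    proof (cases "l \<le> j")
      case True
      have o: "(xs, l) \<in> Obj pp k" using Obj_mono[of xs l pp "Suc k" l k] a ae True j by simp
      have oz: "(replicate (length pp) 0, l) \<in> Obj pp k" using True j by (simp add: Obj_iff)
      have le: "\<theta> ! l \<le> \<theta> ! j" using M(3)[of l j] True j by simp
      show ?thesis
        unfolding ae NK_act_val[OF sk a[unfolded ae]] Pr_val[OF a[unfolded ae]] Pr_val[OF o2]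
        using thp_nth[OF l, of \<theta> j] True le NK_act_val[OF th o] NK_act_val[OF th oz] by simp
    next
      case False
      have o: "(xs, l - 1) \<in> Obj pp k" using Obj_mono[of xs l pp "Suc k" "l - 1" k] a ae l by simp
      have le: "\<theta> ! j \<le> \<theta> ! (l - 1)" using M(3)[of j "l - 1"] False l by simp
      show ?thesis
        unfolding ae NK_act_val[OF sk a[unfolded ae]] Pr_val[OF a[unfolded ae]] Pr_val[OF o2]
        using thp_nth[OF l, of \<theta> j] False le NK_act_val[OF th o] by simp
    qed
  qed
qed

lemma sm_ss:
  assumes th: "\<theta> \<in> mono_list k m" and t: "t \<in> standard_simplex k"
  shows "simplex_map \<theta> t \<in> standard_simplex m"
proof (rule ss_I)
  note M = mono_list_D[OF th]
  have up: "simplex_map \<theta> t p = sum t {i. i < Suc k \<and> \<theta> ! i = p}" for p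
    using M(1) by (simp add: simplex_map_def)
  fix p
  show "0 \<le> simplex_map \<theta> t p" unfolding up by (rule sum_nonneg) (use ss_D(1)[OF t] in auto)
  have "sum t {i. i < Suc k \<and> \<theta> ! i = p} \<le> sum t {..k}"
    by (rule sum_mono2) (use ss_D(1)[OF t] in auto)
  then show "simplex_map \<theta> t p \<le> 1" unfolding up using ss_D(4)[OF t] by simp
next
  note M = mono_list_D[OF th]
  have up: "simplex_map \<theta> t p = sum t {i. i < Suc k \<and> \<theta> ! i = p}" for p
    using M(1) by (simp add: simplex_map_def)
  fix p assume p: "m < p"
  have E: "{i. i < Suc k \<and> \<theta> ! i = p} = {}" using M(2) p by (auto simp: less_Suc_eq_le) (metis not_le)
  show "simplex_map \<theta> t p = 0" unfolding up E by simp
next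
  have "sum (simplex_map \<theta> t) {..m} = Lc (simplex_map \<theta> t) (Suc m)"
    by (simp add: Lc_def lessThan_Suc_atMost)
  also have "\<dots> = sum t {i. i < Suc k \<and> \<theta> ! i < Suc m}" by (rule Lc_sm[OF th])
  also have "{i. i < Suc k \<and> \<theta> ! i < Suc m} = {..k}"
    using mono_list_D(2)[OF th] by (auto simp: less_Suc_eq_le)
  finally show "sum (simplex_map \<theta> t) {..m} = 1" using ss_D(4)[OF t] by simp
qed


lemma rel_eq:
  assumes "\<theta> \<in> mono_list k m" "y \<in> X m" "t \<in> standard_simplex k"
  shows "real_class X act (k, act \<theta> y, t) = real_class X act (m, y, simplex_map \<theta> t)"
proof (rule real_rel_class)
  show "real_rel X act (k, act \<theta> y, t) (m, y, simplex_map \<theta> t)"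
    unfolding real_rel_def using assms
    by (intro exI[of _ k] exI[of _ m] exI[of _ \<theta>] exI[of _ y] exI[of _ t]) simp
qed

definition jsel :: "(nat \<Rightarrow> real) \<Rightarrow> real \<Rightarrow> nat" where
  "jsel t \<sigma> = (LEAST j. \<sigma> \<le> Lc t (Suc j))"

lemma jsel_props:
  assumes t: "t \<in> standard_simplex k" and s0: "0 \<le> \<sigma>" and s1: "\<sigma> \<le> 1"
  shows "jsel t \<sigma> \<le> k" "Lc t (jsel t \<sigma>) \<le> \<sigma>" "\<sigma> \<le> Lc t (Suc (jsel t \<sigma>))"
proof -
  have ex: "\<sigma> \<le> Lc t (Suc k)" using Lc_total[OF t] s1 by simp
  show "jsel t \<sigma> \<le> k" unfolding jsel_def by (rule Least_le) (rule ex)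
  show "\<sigma> \<le> Lc t (Suc (jsel t \<sigma>))" unfolding jsel_def by (rule LeastI) (rule ex)
  show "Lc t (jsel t \<sigma>) \<le> \<sigma>"
  proof (cases "jsel t \<sigma>")
    case 0 then show ?thesis using s0 by (simp add: Lc_0)
  next
    case (Suc j')
    then have "j' < (LEAST j. \<sigma> \<le> Lc t (Suc j))" by (simp add: jsel_def)
    then have "\<not> \<sigma> \<le> Lc t (Suc j')" by (rule not_less_Least)
    then show ?thesis using Suc by simp
  qed
qed

definition Hpre :: "nat list \<Rightarrow> nat \<Rightarrow> nat list \<Rightarrow> real
    \<Rightarrow> nat \<times> (nat list \<times> nat \<Rightarrow> nat list \<times> nat) \<times> (nat \<Rightarrow> real)
    \<Rightarrow> (nat \<times> (nat list \<times> nat \<Rightarrow> nat list \<times> nat) \<times> (nat \<Rightarrow> real)) set" where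
  "Hpre ps q pp \<sigma> a = (case a of (k, x, t) \<Rightarrow>
     real_class (NK_simp ps q pp) (NK_act pp) (Suc k, Pr pp k (jsel t \<sigma>) x, wt (jsel t \<sigma>) t \<sigma>))"

lemma Hpre_simp: "Hpre ps q pp \<sigma> (k, x, t) =
     real_class (NK_simp ps q pp) (NK_act pp) (Suc k, Pr pp k (jsel t \<sigma>) x, wt (jsel t \<sigma>) t \<sigma>)"
  by (simp add: Hpre_def)

context
  fixes ps :: "nat list" and q :: nat and pp :: "nat list"
  assumes len: "length pp = length ps"
begin

lemma rel_eqN:
  assumes "\<theta> \<in> mono_list k m" "y \<in> NK_simp ps q pp m" "t \<in> standard_simplex k"
  shows "real_class (NK_simp ps q pp) (NK_act pp) (k, NK_act pp \<theta> y, t) =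
    real_class (NK_simp ps q pp) (NK_act pp) (m, y, simplex_map \<theta> t)"
  by (rule rel_eq[where X="NK_simp ps q pp" and act="NK_act pp", OF assms])

lemma adjacent:
  assumes x: "x \<in> NK_simp ps q pp k" and t: "t \<in> standard_simplex k" and i: "i < k"
    and s: "\<sigma> = Lc t (Suc i)"
  shows "real_class (NK_simp ps q pp) (NK_act pp) (Suc k, Pr pp k i x, wt i t \<sigma>) =
         real_class (NK_simp ps q pp) (NK_act pp) (Suc k, Pr pp k (Suc i) x, wt (Suc i) t \<sigma>)"
proof -
  have sk: "skp (Suc i) k \<in> mono_list k (Suc k)" using skp_mono i by simp
  have sm: "simplex_map (skp (Suc i) k) t = ins0 (Suc i) t"
    using sm_skp[of k t "Suc i"] ss_D(3)[OF t] i by simp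
  have P1: "Pr pp k i x \<in> NK_simp ps q pp (Suc k)" using Pr_in[OF len x] i by simp
  have P2: "Pr pp k (Suc i) x \<in> NK_simp ps q pp (Suc k)" using Pr_in[OF len x] i by simp
  have "real_class (NK_simp ps q pp) (NK_act pp) (Suc k, Pr pp k i x, wt i t \<sigma>) =
        real_class (NK_simp ps q pp) (NK_act pp) (k, NK_act pp (skp (Suc i) k) (Pr pp k i x), t)"
    using rel_eqN[OF sk P1 t] sm wt_ins_b(1)[OF s] by simp
  also have "\<dots> = real_class (NK_simp ps q pp) (NK_act pp) (k, NK_act pp (skp (Suc i) k) (Pr pp k (Suc i) x), t)"
    using n2[OF i] by simp
  also have "\<dots> = real_class (NK_simp ps q pp) (NK_act pp) (Suc k, Pr pp k (Suc i) x, wt (Suc i) t \<sigma>)"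
    using rel_eqN[OF sk P2 t] sm wt_ins_b(2)[OF s] by simp
  finally show ?thesis .
qed

lemma piece_eq:
  assumes x: "x \<in> NK_simp ps q pp k" and t: "t \<in> standard_simplex k"
  shows "i \<le> j \<Longrightarrow> j \<le> k \<Longrightarrow> Lc t i \<le> \<sigma> \<Longrightarrow> \<sigma> \<le> Lc t (Suc i) \<Longrightarrow> Lc t j \<le> \<sigma> \<Longrightarrow> \<sigma> \<le> Lc t (Suc j) \<Longrightarrow>
    real_class (NK_simp ps q pp) (NK_act pp) (Suc k, Pr pp k i x, wt i t \<sigma>) =
    real_class (NK_simp ps q pp) (NK_act pp) (Suc k, Pr pp k j x, wt j t \<sigma>)"
proof (induction "j - i" arbitrary: i)
  case 0 then show ?case by simp
next
  case (Suc d)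
  then have ij: "i < j" by simp
  have "Lc t (Suc i) \<le> Lc t j" using Lc_mono[OF t] ij by simp
  then have s: "\<sigma> = Lc t (Suc i)" using Suc.prems by simp
  have A: "real_class (NK_simp ps q pp) (NK_act pp) (Suc k, Pr pp k i x, wt i t \<sigma>) =
        real_class (NK_simp ps q pp) (NK_act pp) (Suc k, Pr pp k (Suc i) x, wt (Suc i) t \<sigma>)"
    using adjacent[OF x t _ s] ij Suc.prems by simp
  have "\<sigma> \<le> Lc t (Suc (Suc i))" using s Lc_mono[OF t, of "Suc i" "Suc (Suc i)"] by simp
  then have B: "real_class (NK_simp ps q pp) (NK_act pp) (Suc k, Pr pp k (Suc i) x, wt (Suc i) t \<sigma>) =
        real_class (NK_simp ps q pp) (NK_act pp) (Suc k, Pr pp k j x, wt j t \<sigma>)"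
    using Suc.hyps(1)[of "Suc i"] Suc.hyps(2) Suc.prems ij s by simp
  show ?case using A B by simp
qed

lemma Hpre_piece:
  assumes x: "x \<in> NK_simp ps q pp k" and t: "t \<in> standard_simplex k"
    and s0: "0 \<le> \<sigma>" and s1: "\<sigma> \<le> 1" and j: "j \<le> k" and sj: "Lc t j \<le> \<sigma>" "\<sigma> \<le> Lc t (Suc j)"
  shows "Hpre ps q pp \<sigma> (k, x, t) = real_class (NK_simp ps q pp) (NK_act pp) (Suc k, Pr pp k j x, wt j t \<sigma>)"
proof -
  note J = jsel_props[OF t s0 s1]
  show ?thesis unfolding Hpre_simp
  proof (cases "jsel t \<sigma> \<le> j")
    case True show "real_class (NK_simp ps q pp) (NK_act pp) (Suc k, Pr pp k (jsel t \<sigma>) x, wt (jsel t \<sigma>) t \<sigma>) =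
      real_class (NK_simp ps q pp) (NK_act pp) (Suc k, Pr pp k j x, wt j t \<sigma>)"
      by (rule piece_eq[OF x t True j J(2,3) sj])
  next
    case False then show "real_class (NK_simp ps q pp) (NK_act pp) (Suc k, Pr pp k (jsel t \<sigma>) x, wt (jsel t \<sigma>) t \<sigma>) =
      real_class (NK_simp ps q pp) (NK_act pp) (Suc k, Pr pp k j x, wt j t \<sigma>)"
      using piece_eq[OF x t _ J(1) sj J(2,3)] by simp
  qed
qed

lemma compat:
  assumes th: "\<theta> \<in> mono_list k m" and x: "x \<in> NK_simp ps q pp m" and t: "t \<in> standard_simplex k"
    and s0: "0 \<le> \<sigma>" and s1: "\<sigma> \<le> 1"
  shows "Hpre ps q pp \<sigma> (k, NK_act pp \<theta> x, t) = Hpre ps q pp \<sigma> (m, x, simplex_map \<theta> t)"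
proof -
  define j where "j = jsel t \<sigma>"
  note J = jsel_props[OF t s0 s1, folded j_def]
  note CW = compat_weights[OF th t J]
  have Jm: "\<theta> ! j \<le> m" using mono_list_D(2)[OF th J(1)] .
  have P: "Pr pp m (\<theta> ! j) x \<in> NK_simp ps q pp (Suc m)" using Pr_in[OF len x Jm] .
  have "Hpre ps q pp \<sigma> (k, NK_act pp \<theta> x, t) =
     real_class (NK_simp ps q pp) (NK_act pp) (Suc k, Pr pp k j (NK_act pp \<theta> x), wt j t \<sigma>)"
    by (simp add: Hpre_simp j_def)
  also have "\<dots> = real_class (NK_simp ps q pp) (NK_act pp)
       (Suc k, NK_act pp (thp \<theta> j k) (Pr pp m (\<theta> ! j) x), wt j t \<sigma>)"
    using n5[OF th J(1)] by simp
  also have "\<dots> = real_class (NK_simp ps q pp) (NK_act pp)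
       (Suc m, Pr pp m (\<theta> ! j) x, simplex_map (thp \<theta> j k) (wt j t \<sigma>))"
    by (rule rel_eqN[OF thp_mono[OF th J(1)] P wt_ss[OF t J]])
  also have "\<dots> = real_class (NK_simp ps q pp) (NK_act pp)
       (Suc m, Pr pp m (\<theta> ! j) x, wt (\<theta> ! j) (simplex_map \<theta> t) \<sigma>)"
    using CW(3) by simp
  also have "\<dots> = Hpre ps q pp \<sigma> (m, x, simplex_map \<theta> t)"
    using Hpre_piece[OF x sm_ss[OF th t] s0 s1 Jm CW(1,2)] by simp
  finally show ?thesis .
qed

lemma eq_resp:
  assumes "\<And>a b. R a b \<Longrightarrow> f a = f b" and "equivclp R a b"
  shows "f a = f b"
proof -
  have "(symclp R)\<^sup>*\<^sup>* a b" using assms(2) by (simp add: equivclp_def)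
  then show ?thesis
  proof (induction rule: rtranclp_induct)
    case (step y z)
    then have "f y = f z" using assms(1) by (auto simp: symclp_def)
    with step.IH show ?case by simp
  qed simp
qed

lemma Hpre_resp:
  assumes "equivclp (real_rel (NK_simp ps q pp) (NK_act pp)) a b" and s0: "0 \<le> \<sigma>" and s1: "\<sigma> \<le> 1"
  shows "Hpre ps q pp \<sigma> a = Hpre ps q pp \<sigma> b"
proof (rule eq_resp[OF _ assms(1)])
  fix a b assume "real_rel (NK_simp ps q pp) (NK_act pp) a b"
  then obtain k m \<theta> x t where h: "\<theta> \<in> mono_list k m" "x \<in> NK_simp ps q pp m" "t \<in> standard_simplex k"
    "a = (k, NK_act pp \<theta> x, t)" "b = (m, x, simplex_map \<theta> t)"
    unfolding real_rel_def by blast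
  show "Hpre ps q pp \<sigma> a = Hpre ps q pp \<sigma> b" unfolding h(4,5) by (rule compat[OF h(1-3) s0 s1])
qed

lemma Gm_in: "x \<in> NK_simp ps q pp k \<Longrightarrow> Gm pp k x \<in> NK_simp ps q pp k"
  using unit_rmap[OF len] unit_in[OF len rmap_in[OF len]] by metis

lemma Hpre0:
  assumes x: "x \<in> NK_simp ps q pp k" and t: "t \<in> standard_simplex k"
  shows "Hpre ps q pp 0 (k, x, t) = real_class (NK_simp ps q pp) (NK_act pp) (k, x, t)"
proof -
  have sk: "skp 0 k \<in> mono_list k (Suc k)" using skp_mono by simp
  have L1: "0 \<le> Lc t (Suc 0)" using ss_D(1)[OF t] by (simp add: Lc_Suc Lc_0)
  have P: "Pr pp k 0 x \<in> NK_simp ps q pp (Suc k)" using Pr_in[OF len x] by simp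
  have "Hpre ps q pp 0 (k, x, t) = real_class (NK_simp ps q pp) (NK_act pp) (Suc k, Pr pp k 0 x, wt 0 t 0)"
    using Hpre_piece[OF x t _ _ _ _ L1] by (simp add: Lc_0)
  also have "\<dots> = real_class (NK_simp ps q pp) (NK_act pp) (Suc k, Pr pp k 0 x, simplex_map (skp 0 k) t)"
    using wt_ins_a sm_skp[of k t 0] ss_D(3)[OF t] by simp
  also have "\<dots> = real_class (NK_simp ps q pp) (NK_act pp) (k, NK_act pp (skp 0 k) (Pr pp k 0 x), t)"
    using rel_eqN[OF sk P t] by simp
  also have "\<dots> = real_class (NK_simp ps q pp) (NK_act pp) (k, x, t)" using n1[OF x] by simp
  finally show ?thesis .
qed

lemma Hpre1:
  assumes x: "x \<in> NK_simp ps q pp k" and t: "t \<in> standard_simplex k"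
  shows "Hpre ps q pp 1 (k, x, t) = real_class (NK_simp ps q pp) (NK_act pp) (k, Gm pp k x, t)"
proof -
  define j where "j = jsel t 1"
  note J = jsel_props[OF t, of 1, folded j_def, simplified]
  note WF = wt_full[OF t J(1) J(3)]
  have tj: "t \<in> standard_simplex j" using ss_trunc[OF t WF(1) J(1)] .
  have i1: "[0..<Suc j] \<in> mono_list j (Suc k)" using init_mono J(1) by simp
  have i2: "[0..<Suc j] \<in> mono_list j k" using init_mono J(1) by simp
  have P: "Pr pp k j x \<in> NK_simp ps q pp (Suc k)" using Pr_in[OF len x J(1)] .
  have si: "simplex_map [0..<Suc j] t = t" using sm_init[of j t] WF(1) by simp
  have "Hpre ps q pp 1 (k, x, t) = real_class (NK_simp ps q pp) (NK_act pp) (Suc k, Pr pp k j x, t)"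
    using WF(2) by (simp add: Hpre_simp j_def)
  also have "\<dots> = real_class (NK_simp ps q pp) (NK_act pp) (j, NK_act pp [0..<Suc j] (Pr pp k j x), t)"
    using rel_eqN[OF i1 P tj] si by simp
  also have "\<dots> = real_class (NK_simp ps q pp) (NK_act pp) (j, NK_act pp [0..<Suc j] (Gm pp k x), t)"
    using n3[OF J(1)] by simp
  also have "\<dots> = real_class (NK_simp ps q pp) (NK_act pp) (k, Gm pp k x, t)"
    using rel_eqN[OF i2 Gm_in[OF x] tj] si by simp
  finally show ?thesis .
qed

lemma Hfix:
  assumes xh: "xh \<in> Delta_simp ps q pp k" and t: "t \<in> standard_simplex k" and s0: "0 \<le> \<sigma>" and s1: "\<sigma> \<le> 1"
  shows "Hpre ps q pp \<sigma> (k, unit_Delta ps q pp k xh, t) =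
    real_class (NK_simp ps q pp) (NK_act pp) (k, unit_Delta ps q pp k xh, t)"
proof -
  define y where "y = unit_Delta ps q pp k xh"
  have y: "y \<in> NK_simp ps q pp k" using unit_in[OF len xh] by (simp add: y_def)
  have G: "Gm pp k y = y" using unit_rmap[OF len y] rmap_unit[OF len xh] by (simp add: y_def)
  define j where "j = jsel t \<sigma>"
  note J = jsel_props[OF t s0 s1, folded j_def]
  have "Hpre ps q pp \<sigma> (k, y, t) = real_class (NK_simp ps q pp) (NK_act pp) (Suc k, NK_act pp (dg j k) y, wt j t \<sigma>)"
    using n4[OF J(1) y G] by (simp add: Hpre_simp j_def)
  also have "\<dots> = real_class (NK_simp ps q pp) (NK_act pp) (k, y, simplex_map (dg j k) (wt j t \<sigma>))"
    by (rule rel_eqN[OF dg_mono[OF J(1)] y wt_ss[OF t J]])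
  also have "\<dots> = real_class (NK_simp ps q pp) (NK_act pp) (k, y, t)" using sm_dg[OF t J(1)] by simp
  finally show ?thesis by (simp add: y_def)
qed

end


lemma I_loc: "locally_compact_space (top_of_set {0..1::real})"
  by (rule compact_imp_locally_compact_space, rule compact_space_subtopology) simp

lemma I_haus: "Hausdorff_space (top_of_set {0..1::real})"
  by (rule Hausdorff_space_subtopology) simp

definition Hh :: "nat list \<Rightarrow> nat \<Rightarrow> nat list
    \<Rightarrow> real \<times> (nat \<times> (nat list \<times> nat \<Rightarrow> nat list \<times> nat) \<times> (nat \<Rightarrow> real)) set
    \<Rightarrow> (nat \<times> (nat list \<times> nat \<Rightarrow> nat list \<times> nat) \<times> (nat \<Rightarrow> real)) set" where
  "Hh ps q pp z = Hpre ps q pp (1 - fst z) (SOME a. a \<in> snd z)"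

context
  fixes ps :: "nat list" and q :: nat and pp :: "nat list"
  assumes len: "length pp = length ps"
begin

lemma cf: "continuous_map (prod_topology (top_of_set {0..1::real}) (subtopology (powertop_real UNIV) S)) euclideanreal fst"
  by (rule continuous_map_from_subtopology[OF continuous_map_id, THEN continuous_map_compose[OF continuous_map_fst], unfolded o_def id_def])

lemma cs: "continuous_map (prod_topology (top_of_set {0..1::real}) (subtopology (powertop_real UNIV) S)) euclideanreal (\<lambda>z. snd z i)"
proof -
  have "continuous_map (subtopology (powertop_real UNIV) S) euclideanreal (\<lambda>t. t i)"
    by (rule continuous_map_from_subtopology[OF continuous_map_product_projection]) simp
  from continuous_map_compose[OF continuous_map_snd this] show ?thesis by (simp add: o_def)
qed

lemma cL: "continuous_map (prod_topology (top_of_set {0..1::real}) (subtopology (powertop_real UNIV) S)) euclideanreal (\<lambda>z. Lc (snd z) j)"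
  unfolding Lc_def by (rule continuous_map_sum) (auto intro: cs)

lemma cwt: "continuous_map (prod_topology (top_of_set {0..1::real}) (subtopology (powertop_real UNIV) S)) euclideanreal
   (\<lambda>z. wt j (snd z) (1 - fst z) l)"
proof -
  have c1: "continuous_map (prod_topology (top_of_set {0..1::real}) (subtopology (powertop_real UNIV) S)) euclideanreal (\<lambda>z. 1 - fst z)"
    by (intro continuous_map_diff cf continuous_map_const[THEN iffD2]) simp
  show ?thesis
  proof (cases "l < j")
    case True then show ?thesis by (simp add: wt_def cs)
  next
    case False
    show ?thesis
    proof (cases "l = j")
      case True then show ?thesis using False by (simp add: wt_def) (intro continuous_map_diff c1 cL)
    next
      case False2: False
      show ?thesis
      proof (cases "l = Suc j")
        case True then show ?thesis using False False2 by (simp add: wt_def) (intro continuous_map_diff c1 cL)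
      next
        case False3: False then show ?thesis using False False2 by (simp add: wt_def cs)
      qed
    qed
  qed
qed

lemma slice_cont:
  assumes x: "x \<in> NK_simp ps q pp k"
  shows "continuous_map (prod_topology (top_of_set {0..1::real}) (subtopology (powertop_real UNIV) (standard_simplex k)))
     (realization (NK_simp ps q pp) (NK_act pp)) (\<lambda>z. Hpre ps q pp (1 - fst z) (k, x, snd z))"
proof -
  let ?Z = "prod_topology (top_of_set {0..1::real}) (subtopology (powertop_real UNIV) (standard_simplex k))"
  define T where "T j = {z \<in> topspace ?Z. Lc (snd z) j \<le> 1 - fst z \<and> 1 - fst z \<le> Lc (snd z) (Suc j)}" for j
  define f where "f j z = real_class (NK_simp ps q pp) (NK_act pp) (Suc k, Pr pp k j x, wt j (snd z) (1 - fst z))" for j z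
  have tz: "fst z \<in> {0..1}" "snd z \<in> standard_simplex k" if "z \<in> topspace ?Z" for z
    using that by auto
  show ?thesis
  proof (rule pasting_lemma_closed[where I = "{..k}" and T = T and f = f])
    show "finite {..k}" by simp
  next
    fix j assume "j \<in> {..k}"
    have c1: "continuous_map ?Z euclideanreal (\<lambda>z. Lc (snd z) j - (1 - fst z))"
      by (intro continuous_map_diff cL cf continuous_map_const[THEN iffD2]) simp
    have c2: "continuous_map ?Z euclideanreal (\<lambda>z. (1 - fst z) - Lc (snd z) (Suc j))"
      by (intro continuous_map_diff cL cf continuous_map_const[THEN iffD2]) simp
    have cl: "closedin euclideanreal {..0::real}" using closed_closedin closed_atMost by blast
    have "T j = {z \<in> topspace ?Z. Lc (snd z) j - (1 - fst z) \<in> {..0}} \<inter> {z \<in> topspace ?Z. (1 - fst z) - Lc (snd z) (Suc j) \<in> {..0}}"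
      by (auto simp: T_def)
    then show "closedin ?Z (T j)"
      using closedin_continuous_map_preimage[OF c1 cl] closedin_continuous_map_preimage[OF c2 cl] by auto
  next
    fix j assume j: "j \<in> {..k}"
    have P: "Pr pp k j x \<in> NK_simp ps q pp (Suc k)" using Pr_in[OF len x] j by simp
    have cw: "continuous_map (subtopology ?Z (T j)) (subtopology (powertop_real UNIV) (standard_simplex (Suc k)))
        (\<lambda>z. wt j (snd z) (1 - fst z))"
    proof (rule continuous_map_into_subtopology)
      show "continuous_map (subtopology ?Z (T j)) (powertop_real UNIV) (\<lambda>z. wt j (snd z) (1 - fst z))"
        unfolding continuous_map_componentwise_UNIV
        by (intro allI continuous_map_from_subtopology cwt)
      show "(\<lambda>z. wt j (snd z) (1 - fst z)) \<in> topspace (subtopology ?Z (T j)) \<rightarrow> standard_simplex (Suc k)"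
      proof (rule Pi_I)
        fix z assume "z \<in> topspace (subtopology ?Z (T j))"
        then have "z \<in> T j" by simp
        then have "snd z \<in> standard_simplex k" "Lc (snd z) j \<le> 1 - fst z" "1 - fst z \<le> Lc (snd z) (Suc j)"
          by (auto simp: T_def)
        then show "wt j (snd z) (1 - fst z) \<in> standard_simplex (Suc k)" using wt_ss[of "snd z" k j] j by simp
      qed
    qed
    show "continuous_map (subtopology ?Z (T j)) (realization (NK_simp ps q pp) (NK_act pp)) (f j)"
      using continuous_map_compose[OF cw class_cont[where Y="NK_simp ps q pp" and act="NK_act pp", OF P]] by (simp add: f_def[abs_def] o_def)
  next
    fix i j z assume ij: "i \<in> {..k}" "j \<in> {..k}" "z \<in> topspace ?Z \<inter> T i \<inter> T j"
    then have zz: "snd z \<in> standard_simplex k" "Lc (snd z) i \<le> 1 - fst z" "1 - fst z \<le> Lc (snd z) (Suc i)"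
       "Lc (snd z) j \<le> 1 - fst z" "1 - fst z \<le> Lc (snd z) (Suc j)" by (auto simp: T_def)
    show "f i z = f j z"
    proof (cases "i \<le> j")
      case True then show ?thesis unfolding f_def using piece_eq[OF len x zz(1) True _ zz(2-5)] ij by simp
    next
      case False then show ?thesis unfolding f_def using piece_eq[OF len x zz(1) _ _ zz(4,5,2,3)] ij by simp
    qed
  next
    fix z assume z: "z \<in> topspace ?Z"
    define j where "j = jsel (snd z) (1 - fst z)"
    have s: "0 \<le> 1 - fst z" "1 - fst z \<le> 1" using tz[OF z] by auto
    note J = jsel_props[OF tz(2)[OF z] s, folded j_def]
    show "\<exists>j. j \<in> {..k} \<and> z \<in> T j \<and> Hpre ps q pp (1 - fst z) (k, x, snd z) = f j z"
      using J z by (intro exI[of _ j]) (simp add: T_def f_def Hpre_simp j_def)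
  qed
qed

lemma Hh_class:
  assumes a: "a \<in> real_carrier (NK_simp ps q pp)" and s: "s \<in> {0..1}"
  shows "Hh ps q pp (s, real_class (NK_simp ps q pp) (NK_act pp) a) = Hpre ps q pp (1 - s) a"
proof -
  let ?c = "real_class (NK_simp ps q pp) (NK_act pp) a"
  have "a \<in> ?c" using a by (rule real_class_self)
  then have b: "(SOME b. b \<in> ?c) \<in> ?c" by (rule someI)
  then have "equivclp (real_rel (NK_simp ps q pp) (NK_act pp)) a (SOME b. b \<in> ?c)"
    unfolding real_class_def by blast
  then have "Hpre ps q pp (1 - s) a = Hpre ps q pp (1 - s) (SOME b. b \<in> ?c)"
    by (rule Hpre_resp[OF len]) (use s in auto)
  then show ?thesis by (simp add: Hh_def)
qed

lemma Hh_cont: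
  "continuous_map (prod_topology (top_of_set {0..1::real}) (realization (NK_simp ps q pp) (NK_act pp)))
     (realization (NK_simp ps q pp) (NK_act pp)) (Hh ps q pp)"
proof -
  have Q: "quotient_map (prod_topology (top_of_set {0..1::real}) (real_pre (NK_simp ps q pp)))
      (prod_topology (top_of_set {0..1::real}) (realization (NK_simp ps q pp) (NK_act pp)))
      (\<lambda>(x, y). (x, real_class (NK_simp ps q pp) (NK_act pp) y))"
    by (rule quotient_map_prod_right[OF I_loc _ quotient_real]) (simp add: I_haus)
  have G: "continuous_map (prod_topology (top_of_set {0..1::real}) (real_pre (NK_simp ps q pp)))
      (realization (NK_simp ps q pp) (NK_act pp)) (\<lambda>z. Hpre ps q pp (1 - fst z) (snd z))"
    unfolding real_pre_def
  proof (intro cont_prod_sum cont_prod_discrete)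
    fix k x assume x: "x \<in> NK_simp ps q pp k"
    show "continuous_map (prod_topology (top_of_set {0..1::real}) (subtopology (powertop_real UNIV) (standard_simplex k)))
        (realization (NK_simp ps q pp) (NK_act pp))
        (\<lambda>(z, t). (\<lambda>(z, x). Hpre ps q pp (1 - fst (z, k, x)) (snd (z, k, x))) (z, x, t))"
      using slice_cont[OF x] by (simp add: case_prod_beta')
  qed
  show ?thesis
  proof (rule continuous_compose_quotient_map[OF Q])
    show "continuous_map (prod_topology (top_of_set {0..1::real}) (real_pre (NK_simp ps q pp)))
      (realization (NK_simp ps q pp) (NK_act pp)) (Hh ps q pp \<circ> (\<lambda>(x, y). (x, real_class (NK_simp ps q pp) (NK_act pp) y)))"
    proof (rule continuous_map_eq[OF G])
      fix z assume "z \<in> topspace (prod_topology (top_of_set {0..1::real}) (real_pre (NK_simp ps q pp)))"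
      then have "fst z \<in> {0..1}" "snd z \<in> real_carrier (NK_simp ps q pp)" by (auto simp: topspace_real_pre)
      then show "Hpre ps q pp (1 - fst z) (snd z) =
        (Hh ps q pp \<circ> (\<lambda>(x, y). (x, real_class (NK_simp ps q pp) (NK_act pp) y))) z"
        using Hh_class by (cases z) simp
    qed
  qed
qed

end


theorem proposition4p6:
  fixes n :: nat and ps :: "nat list" and q :: nat
  assumes "n \<ge> 1" and "length ps = n"
  shows "reedy_weq n (Delta_simp ps q) Delta_act (NK_simp ps q) NK_act (unit_Delta ps q)"
  unfolding reedy_weq_def sset_weq_def
proof (intro allI impI)
  fix pp :: "nat list" assume "length pp = n"
  then have len: "length pp = length ps" using assms(2) by simp
  have ssu: "ssmap (Delta_simp ps q pp) (Delta_act pp) (NK_simp ps q pp) (NK_act pp) (unit_Delta ps q pp)"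
    unfolding ssmap_def using unit_in[OF len] unit_nat by blast
  have ssr: "ssmap (NK_simp ps q pp) (NK_act pp) (Delta_simp ps q pp) (Delta_act pp) (rmap pp)"
    unfolding ssmap_def using rmap_in[OF len] rmap_nat[OF len] by blast
  let ?g = "realize_map (NK_simp ps q pp) (NK_act pp) (unit_Delta ps q pp)"
  let ?r = "realize_map (Delta_simp ps q pp) (Delta_act pp) (rmap pp)"
  have gcl: "?g (real_class (Delta_simp ps q pp) (Delta_act pp) (k, xh, t)) =
      real_class (NK_simp ps q pp) (NK_act pp) (k, unit_Delta ps q pp k xh, t)"
    if "xh \<in> Delta_simp ps q pp k" "t \<in> standard_simplex k" for k xh t
    using realize_map_class[OF ssu, of "(k, xh, t)"] that by (simp add: real_carrier_def)
  have rcl: "?r (real_class (NK_simp ps q pp) (NK_act pp) (k, x, t)) =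
      real_class (Delta_simp ps q pp) (Delta_act pp) (k, rmap pp k x, t)"
    if "x \<in> NK_simp ps q pp k" "t \<in> standard_simplex k" for k x t
    using realize_map_class[OF ssr, of "(k, x, t)"] that by (simp add: real_carrier_def)
  show "weak_homotopy_equivalence (realization (Delta_simp ps q pp) (Delta_act pp))
      (realization (NK_simp ps q pp) (NK_act pp)) ?g"
  proof (rule weq_retract[where r = ?r and H = "Hh ps q pp"])
    show "continuous_map (realization (Delta_simp ps q pp) (Delta_act pp)) (realization (NK_simp ps q pp) (NK_act pp)) ?g"
      by (rule realize_map_cont[OF ssu])
    show "continuous_map (realization (NK_simp ps q pp) (NK_act pp)) (realization (Delta_simp ps q pp) (Delta_act pp)) ?r"
      by (rule realize_map_cont[OF ssr])
    show "continuous_map (prod_topology (top_of_set {0..1}) (realization (NK_simp ps q pp) (NK_act pp)))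
        (realization (NK_simp ps q pp) (NK_act pp)) (Hh ps q pp)"
      by (rule Hh_cont[OF len])
  next
    fix c assume "c \<in> topspace (realization (Delta_simp ps q pp) (Delta_act pp))"
    then obtain k xh t where c: "c = real_class (Delta_simp ps q pp) (Delta_act pp) (k, xh, t)"
      "xh \<in> Delta_simp ps q pp k" "t \<in> standard_simplex k"
      by (auto simp: topspace_realization real_carrier_def)
    show "?r (?g c) = c"
      unfolding c(1) gcl[OF c(2,3)] rcl[OF unit_in[OF len c(2)] c(3)] rmap_unit[OF len c(2)] ..
  next
    fix y assume "y \<in> topspace (realization (NK_simp ps q pp) (NK_act pp))"
    then obtain k x t where y: "y = real_class (NK_simp ps q pp) (NK_act pp) (k, x, t)"
      "x \<in> NK_simp ps q pp k" "t \<in> standard_simplex k"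
      by (auto simp: topspace_realization real_carrier_def)
    have yc: "(k, x, t) \<in> real_carrier (NK_simp ps q pp)" using y by (simp add: real_carrier_def)
    have h0: "Hh ps q pp (0, y) = Hpre ps q pp 1 (k, x, t)" using Hh_class[OF len yc, of 0] y(1) by simp
    have h1: "Hh ps q pp (1, y) = Hpre ps q pp 0 (k, x, t)" using Hh_class[OF len yc, of 1] y(1) by simp
    show "Hh ps q pp (0, y) = ?g (?r y)"
      unfolding h0 unfolding y(1) rcl[OF y(2,3)] gcl[OF rmap_in[OF len y(2)] y(3)]
        unit_rmap[OF len y(2)] using Hpre1[OF len y(2,3)] by simp
    show "Hh ps q pp (1, y) = y"
      unfolding h1 unfolding y(1) using Hpre0[OF len y(2,3)] by simp
  next
    fix c s assume c0: "c \<in> topspace (realization (Delta_simp ps q pp) (Delta_act pp))" and s: "s \<in> {0..1::real}"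
    then obtain k xh t where c: "c = real_class (Delta_simp ps q pp) (Delta_act pp) (k, xh, t)"
      "xh \<in> Delta_simp ps q pp k" "t \<in> standard_simplex k"
      by (auto simp: topspace_realization real_carrier_def)
    have yc: "(k, unit_Delta ps q pp k xh, t) \<in> real_carrier (NK_simp ps q pp)"
      using unit_in[OF len c(2)] c(3) by (simp add: real_carrier_def)
    show "Hh ps q pp (s, ?g c) = ?g c"
      unfolding c(1) gcl[OF c(2,3)] Hh_class[OF len yc s]
      using Hfix[OF len c(2,3)] s by simp
  qed
qed


end
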